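(* Let $A=\sigma(R)\langle x_1,\dots,x_n\rangle$ be a $\sigma$-PBW extension of $R$ (under the standing assumptions below). Let $M\neq0$ be a submodule of $A^m$ and let $G$ be a finite set of nonzero generators of $M$. The following are equivalent: (i) $G$ is a Gröbner basis of $M$. (ii) For every $F=\{\mathbf g_1,\dots,\mathbf g_s\}\subseteq G$ with $\mathbf X_F\neq\mathbf 0$, every $\theta\in\mathbb N^n$, and every $(b_1,\dots,b_s)\in B_{F,\theta}$, we have $\sum_{i=1}^sb_ix^{\gamma_i+\theta}\mathbf g_i\xrightarrow{G}_+\mathbf 0$. In particular, if $G$ is a Gröbner basis of $M$, then for all such $F$ and all $(b_1,\dots,b_s)\in B_F$ we have $\sum_{i=1}^sb_ix^{\gamma_i}\mathbf g_i\xrightarrow{G}_+\mathbf 0$.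
   Context: Let $R\subseteq A$ be rings. $A$ is a $\sigma$-PBW extension of $R$, written $A=\sigma(R)\langle x_1,\dots,x_n\rangle$, if there are $x_1,\dots,x_n\in A\setminus R$ such that: (i) $A$ is a free left $R$-module with basis $\mathrm{Mon}(A)=\{x^\alpha=x_1^{\alpha_1}\cdots x_n^{\alpha_n}:\alpha\in\mathbb N^n\}$, with $x^0=1$; (ii) for every $i$ and every $r\in R\setminus\{0\}$ there is $c_{i,r}\in R\setminus\{0\}$ with $x_ir-c_{i,r}x_i\in R$; (iii) for all $i,j$ there is $c_{i,j}\in R\setminus\{0\}$ with $x_jx_i-c_{i,j}x_ix_j\in R+Rx_1+\dots+Rx_n$. There are injective ring endomorphisms $\sigma_i$ of $R$ and $\sigma_i$-derivations $\delta_i$ with $x_ir=\sigma_i(r)x_i+\delta_i(r)$. Write $\sigma^\alpha=\sigma_1^{\alpha_1}\circ\cdots\circ\sigma_n^{\alpha_n}$ and $|\alpha|=\sum\alpha_i$. For $\alpha,\beta$ there are unique $c_{\alpha,\beta}\in R$ (left invertible) and $p_{\alpha,\beta}\in A$ with $x^\alpha x^\beta=c_{\alpha,\beta}x^{\alpha+\beta}+p_{\alpha,\beta}$, where $p_{\alpha,\beta}=0$ or $\deg p_{\alpha,\beta}<|\alpha+\beta|$. Standing assumptions: $R$ is left Gröbner soluble (left Noetherian; left ideal membership decidable with computable coefficients; finite generating sets of $\mathrm{Syz}_R[r_1\cdots r_k]=\{(b_1,\dots,b_k)\in R^k:\sum b_ir_i=0\}$ computable). $\mathrm{Mon}(A)$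 carries a monomial order, i.e. a total order $\succeq$ with: (a) $x^\beta\succeq x^\alpha\Rightarrow lm(x^\gamma x^\beta x^\lambda)\succeq lm(x^\gamma x^\alpha x^\lambda)$; (b) $x^\alpha\succeq1$; (c) $|\beta|\ge|\alpha|\Rightarrow x^\beta\succeq x^\alpha$. $A^m$ is the free left $A$-module of column vectors with canonical basis $\mathbf e_i$. Monomials of $A^m$ are $x^\alpha\mathbf e_i$, with $\mathrm{ind}=i$, $\exp=\alpha$, $\deg=|\alpha|$. The monomial $x^\alpha\mathbf e_i$ divides $x^\beta\mathbf e_j$ iff $i=j$ and $\beta_k\ge\alpha_k$ for all $k$. The lcm of $x^\alpha\mathbf e_i$ and $x^\beta\mathbf e_j$ is $\mathbf 0$ if $i\neq j$, and $x^\gamma\mathbf e_i$ with $\gamma_k=\max(\alpha_k,\beta_k)$ if $i=j$. $\mathrm{Mon}(A^m)$ carries a monomial order, i.e. a total order with: (i) $lm(x^\beta x^\alpha)\mathbf e_i\succeq x^\alpha\mathbf e_i$; (ii) $x^\beta\mathbf e_j\succeq x^\alpha\mathbf e_i\Rightarrow lm(x^\gamma x^\beta)\mathbf e_j\succeq lm(x^\gamma x^\alpha)\mathbf e_i$; (iii) $\deg\mathbf X\ge\deg\mathbf Y\Rightarrow\mathbf X\succeq\mathbf Y$. For nonzero $\mathbf f=c_1\mathbf X_1+\dots+c_t\mathbf X_t$ with $c_i\in R\setminus\{0\}$ and $\mathbf X_1\succ\dots\succ\mathbf X_t$, set $lm(\mathbf f)=\mathbf X_1$, $lc(\mathbf f)=c_1$,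 $lt(\mathbf f)=c_1\mathbf X_1$. Also $lm(\mathbf 0)=\mathbf 0$ and $\mathbf X\succ\mathbf 0$. Reduction. Let $F$ be a finite set of nonzero vectors and $\mathbf f,\mathbf h\in A^m$. We write $\mathbf f\xrightarrow{F}\mathbf h$ (one step) if there are $\mathbf f_1,\dots,\mathbf f_t\in F$ and $r_1,\dots,r_t\in R$ with: (1) $lm(\mathbf f_i)\mid lm(\mathbf f)$, with $\alpha_i+\exp(lm\,\mathbf f_i)=\exp(lm\,\mathbf f)$; (2) $lc(\mathbf f)=\sum r_i\sigma^{\alpha_i}(lc\,\mathbf f_i)c_{\alpha_i,\exp(lm\,\mathbf f_i)}$; (3) $\mathbf h=\mathbf f-\sum r_ix^{\alpha_i}\mathbf f_i$. By convention $\mathbf 0\xrightarrow{F}\mathbf 0$. $\mathbf f\xrightarrow{F}_+\mathbf h$ means a finite chain of one-step reductions from $\mathbf f$ to $\mathbf h$. $\mathbf f$ is reduced w.r.t. $F$ if $\mathbf f=\mathbf 0$ or no one-step reduction of $\mathbf f$ exists; otherwise it is reducible. Gröbner basis. For a submodule $M\neq0$ of $A^m$, a nonempty finite set $G$ of nonzero vectors of $M$ is a Gröbner basis for $M$ if every nonzero $\mathbf f\in M$ is reducible w.r.t. $G$. Syzygy data. For $F=\{\mathbf g_1,\dots,\mathbf g_s\}\subseteq A^m$: - $\mathbf X_F=\mathrm{lcm}\{lm(\mathbf g_1),\dots,lm(\mathbf g_s)\}$; - $\beta_i=\exp(lm\,\mathbf g_i)$; - when $\mathbf X_F\neq\mathbf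 0$, $\gamma_i\in\mathbb N^n$ is defined by $\gamma_i+\beta_i=\exp(\mathbf X_F)$. For $\theta\in\mathbb N^n$, $B_{F,\theta}$ is a finite generating set of the left $R$-module $$S_{F,\theta}=\mathrm{Syz}_R\big[\sigma^{\gamma_1+\theta}(lc\,\mathbf g_1)c_{\gamma_1+\theta,\beta_1}\ \cdots\ \sigma^{\gamma_s+\theta}(lc\,\mathbf g_s)c_{\gamma_s+\theta,\beta_s}\big].$$ For $\theta=0$ we write $B_F=B_{F,0}$. *)

theory Defs
  imports Main "HOL-Library.Function_Algebras"
begin

(* Exponent vectors alpha in N^n are functions nat => nat vanishing from index n on;
   variables x_1..x_n are x 0 .. x (n-1); vectors of A^m are functions nat => 'a
   vanishing from index m on (components 0..m-1); a monomial x^alpha e_i of A^m is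
   the pair (alpha, i). The ring A is the whole type 'a. *)

type_synonym mexp = "nat \<Rightarrow> nat"

definition exps :: "nat \<Rightarrow> mexp set" where
  "exps n = {\<alpha>. \<forall>i\<ge>n. \<alpha> i = 0}"

definition tdeg :: "nat \<Rightarrow> mexp \<Rightarrow> nat" where
  "tdeg n \<alpha> = (\<Sum>i<n. \<alpha> i)"

definition xmon :: "(nat \<Rightarrow> 'a::monoid_mult) \<Rightarrow> nat \<Rightarrow> mexp \<Rightarrow> 'a" where
  "xmon x n \<alpha> = prod_list (map (\<lambda>i. x i ^ \<alpha> i) [0..<n])"

definition is_coeffs :: "'a::ring_1 set \<Rightarrow> (nat \<Rightarrow> 'a) \<Rightarrow> nat \<Rightarrow> 'a \<Rightarrow> (mexp \<Rightarrow> 'a) \<Rightarrow> bool" where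
  "is_coeffs R x n a c \<longleftrightarrow>
     (\<forall>\<alpha>. c \<alpha> \<in> R) \<and> (\<forall>\<alpha>. c \<alpha> \<noteq> 0 \<longrightarrow> \<alpha> \<in> exps n) \<and> finite {\<alpha>. c \<alpha> \<noteq> 0} \<and>
     a = (\<Sum>\<alpha>\<in>{\<alpha>. c \<alpha> \<noteq> 0}. c \<alpha> * xmon x n \<alpha>)"

definition subring :: "'a::ring_1 set \<Rightarrow> bool" where
  "subring R \<longleftrightarrow> 0 \<in> R \<and> 1 \<in> R \<and> (\<forall>a\<in>R. \<forall>b\<in>R. a + b \<in> R \<and> a - b \<in> R \<and> a * b \<in> R)"

definition left_ideal :: "'a::ring_1 set \<Rightarrow> 'a set \<Rightarrow> bool" where
  "left_ideal R I \<longleftrightarrow> I \<subseteq> R \<and> 0 \<in> I \<and> (\<forall>a\<in>I. \<forall>b\<in>I. a + b \<in> I) \<and> (\<forall>r\<in>R. \<forall>a\<in>I. r * a \<in> I)"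

definition left_noetherian :: "'a::ring_1 set \<Rightarrow> bool" where
  "left_noetherian R \<longleftrightarrow>
     (\<forall>I :: nat \<Rightarrow> 'a set. (\<forall>k. left_ideal R (I k) \<and> I k \<subseteq> I (Suc k)) \<longrightarrow> (\<exists>N. \<forall>k\<ge>N. I k = I N))"

definition sigma_PBW :: "'a::ring_1 set \<Rightarrow> (nat \<Rightarrow> 'a) \<Rightarrow> nat \<Rightarrow> bool" where
  "sigma_PBW R x n \<longleftrightarrow>
     subring R \<and> (\<forall>i<n. x i \<notin> R) \<and>
     (\<forall>a. \<exists>!c. is_coeffs R x n a c) \<and>
     (\<forall>i<n. \<forall>r\<in>R. r \<noteq> 0 \<longrightarrow> (\<exists>c\<in>R. c \<noteq> 0 \<and> x i * r - c * x i \<in> R)) \<and>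
     (\<forall>i<n. \<forall>j<n. \<exists>c\<in>R. c \<noteq> 0 \<and>
        (\<exists>r0\<in>R. \<exists>r. (\<forall>k. r k \<in> R) \<and> x j * x i - c * x i * x j = r0 + (\<Sum>k<n. r k * x k)))"

definition coef :: "'a::ring_1 set \<Rightarrow> (nat \<Rightarrow> 'a) \<Rightarrow> nat \<Rightarrow> 'a \<Rightarrow> mexp \<Rightarrow> 'a" where
  "coef R x n a = (THE c. is_coeffs R x n a c)"

definition sig :: "'a::ring_1 set \<Rightarrow> (nat \<Rightarrow> 'a) \<Rightarrow> nat \<Rightarrow> 'a \<Rightarrow> 'a" where
  "sig R x i r = (THE c. c \<in> R \<and> x i * r - c * x i \<in> R)"

definition sigpow :: "'a::ring_1 set \<Rightarrow> (nat \<Rightarrow> 'a) \<Rightarrow> nat \<Rightarrow> mexp \<Rightarrow> 'a \<Rightarrow> 'a" where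
  "sigpow R x n \<alpha> = foldr (\<lambda>i f. (sig R x i ^^ \<alpha> i) \<circ> f) [0..<n] id"

definition cab :: "'a::ring_1 set \<Rightarrow> (nat \<Rightarrow> 'a) \<Rightarrow> nat \<Rightarrow> mexp \<Rightarrow> mexp \<Rightarrow> 'a" where
  "cab R x n \<alpha> \<beta> = coef R x n (xmon x n \<alpha> * xmon x n \<beta>) (\<alpha> + \<beta>)"

(* leading exponent of a nonzero element of A; mle a b means x^a \<preceq> x^b *)
definition lmA :: "'a::ring_1 set \<Rightarrow> (nat \<Rightarrow> 'a) \<Rightarrow> nat \<Rightarrow> (mexp \<Rightarrow> mexp \<Rightarrow> bool) \<Rightarrow> 'a \<Rightarrow> mexp" where
  "lmA R x n mle p = (THE \<alpha>. coef R x n p \<alpha> \<noteq> 0 \<and> (\<forall>\<beta>. coef R x n p \<beta> \<noteq> 0 \<longrightarrow> mle \<beta> \<alpha>))"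

(* monomial order on Mon(A) (degree compatibility read as: |alpha| < |beta| implies x^alpha \<preceq> x^beta) *)
definition mon_order :: "'a::ring_1 set \<Rightarrow> (nat \<Rightarrow> 'a) \<Rightarrow> nat \<Rightarrow> (mexp \<Rightarrow> mexp \<Rightarrow> bool) \<Rightarrow> bool" where
  "mon_order R x n mle \<longleftrightarrow>
     (\<forall>\<alpha>\<in>exps n. mle \<alpha> \<alpha>) \<and>
     (\<forall>\<alpha>\<in>exps n. \<forall>\<beta>\<in>exps n. mle \<alpha> \<beta> \<and> mle \<beta> \<alpha> \<longrightarrow> \<alpha> = \<beta>) \<and>
     (\<forall>\<alpha>\<in>exps n. \<forall>\<beta>\<in>exps n. \<forall>\<gamma>\<in>exps n. mle \<alpha> \<beta> \<and> mle \<beta> \<gamma> \<longrightarrow> mle \<alpha> \<gamma>) \<and>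
     (\<forall>\<alpha>\<in>exps n. \<forall>\<beta>\<in>exps n. mle \<alpha> \<beta> \<or> mle \<beta> \<alpha>) \<and>
     (\<forall>\<alpha>\<in>exps n. \<forall>\<beta>\<in>exps n. \<forall>\<gamma>\<in>exps n. \<forall>\<mu>\<in>exps n. mle \<alpha> \<beta> \<longrightarrow>
        mle (lmA R x n mle (xmon x n \<gamma> * xmon x n \<alpha> * xmon x n \<mu>))
            (lmA R x n mle (xmon x n \<gamma> * xmon x n \<beta> * xmon x n \<mu>))) \<and>
     (\<forall>\<alpha>\<in>exps n. mle 0 \<alpha>) \<and>
     (\<forall>\<alpha>\<in>exps n. \<forall>\<beta>\<in>exps n. tdeg n \<alpha> < tdeg n \<beta> \<longrightarrow> mle \<alpha> \<beta>)"

definition vmon_order :: "'a::ring_1 set \<Rightarrow> (nat \<Rightarrow> 'a) \<Rightarrow> nat \<Rightarrow> (mexp \<Rightarrow> mexp \<Rightarrow> bool) \<Rightarrow> nat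
     \<Rightarrow> (mexp \<times> nat \<Rightarrow> mexp \<times> nat \<Rightarrow> bool) \<Rightarrow> bool" where
  "vmon_order R x n mle m vle \<longleftrightarrow>
     (let Mo = exps n \<times> {..<m} in
     (\<forall>X\<in>Mo. vle X X) \<and>
     (\<forall>X\<in>Mo. \<forall>Y\<in>Mo. vle X Y \<and> vle Y X \<longrightarrow> X = Y) \<and>
     (\<forall>X\<in>Mo. \<forall>Y\<in>Mo. \<forall>Z\<in>Mo. vle X Y \<and> vle Y Z \<longrightarrow> vle X Z) \<and>
     (\<forall>X\<in>Mo. \<forall>Y\<in>Mo. vle X Y \<or> vle Y X) \<and>
     (\<forall>\<alpha>\<in>exps n. \<forall>\<beta>\<in>exps n. \<forall>i<m. vle (\<alpha>, i) (lmA R x n mle (xmon x n \<beta> * xmon x n \<alpha>), i)) \<and>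
     (\<forall>\<alpha>\<in>exps n. \<forall>\<beta>\<in>exps n. \<forall>\<gamma>\<in>exps n. \<forall>i<m. \<forall>j<m. vle (\<alpha>, i) (\<beta>, j) \<longrightarrow>
        vle (lmA R x n mle (xmon x n \<gamma> * xmon x n \<alpha>), i) (lmA R x n mle (xmon x n \<gamma> * xmon x n \<beta>), j)) \<and>
     (\<forall>X\<in>Mo. \<forall>Y\<in>Mo. tdeg n (fst X) < tdeg n (fst Y) \<longrightarrow> vle X Y))"

definition vecs :: "nat \<Rightarrow> (nat \<Rightarrow> 'a::zero) set" where
  "vecs m = {f. \<forall>i\<ge>m. f i = 0}"

definition smultv :: "'a::ring_1 \<Rightarrow> (nat \<Rightarrow> 'a) \<Rightarrow> (nat \<Rightarrow> 'a)" where
  "smultv a f = (\<lambda>i. a * f i)"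

definition submodule :: "nat \<Rightarrow> (nat \<Rightarrow> 'a::ring_1) set \<Rightarrow> bool" where
  "submodule m M \<longleftrightarrow> M \<subseteq> vecs m \<and> 0 \<in> M \<and> (\<forall>f\<in>M. \<forall>g\<in>M. f + g \<in> M) \<and> (\<forall>a. \<forall>f\<in>M. smultv a f \<in> M)"

definition lspan :: "(nat \<Rightarrow> 'a::ring_1) set \<Rightarrow> (nat \<Rightarrow> 'a) set" where
  "lspan G = {\<Sum>g\<in>G. smultv (a g) g | a. True}"

definition vcoef :: "'a::ring_1 set \<Rightarrow> (nat \<Rightarrow> 'a) \<Rightarrow> nat \<Rightarrow> (nat \<Rightarrow> 'a) \<Rightarrow> mexp \<times> nat \<Rightarrow> 'a" where
  "vcoef R x n f X = coef R x n (f (snd X)) (fst X)"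

definition lmV :: "'a::ring_1 set \<Rightarrow> (nat \<Rightarrow> 'a) \<Rightarrow> nat \<Rightarrow> (mexp \<times> nat \<Rightarrow> mexp \<times> nat \<Rightarrow> bool)
     \<Rightarrow> (nat \<Rightarrow> 'a) \<Rightarrow> mexp \<times> nat" where
  "lmV R x n vle f = (THE X. vcoef R x n f X \<noteq> 0 \<and> (\<forall>Y. vcoef R x n f Y \<noteq> 0 \<longrightarrow> vle Y X))"

definition lcV :: "'a::ring_1 set \<Rightarrow> (nat \<Rightarrow> 'a) \<Rightarrow> nat \<Rightarrow> (mexp \<times> nat \<Rightarrow> mexp \<times> nat \<Rightarrow> bool)
     \<Rightarrow> (nat \<Rightarrow> 'a) \<Rightarrow> 'a" where
  "lcV R x n vle f = vcoef R x n f (lmV R x n vle f)"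

definition red1 :: "'a::ring_1 set \<Rightarrow> (nat \<Rightarrow> 'a) \<Rightarrow> nat \<Rightarrow> (mexp \<times> nat \<Rightarrow> mexp \<times> nat \<Rightarrow> bool)
     \<Rightarrow> (nat \<Rightarrow> 'a) set \<Rightarrow> (nat \<Rightarrow> 'a) \<Rightarrow> (nat \<Rightarrow> 'a) \<Rightarrow> bool" where
  "red1 R x n vle F f h \<longleftrightarrow> f \<noteq> 0 \<and>
     (\<exists>(t::nat) (fs :: nat \<Rightarrow> nat \<Rightarrow> 'a) (rs :: nat \<Rightarrow> 'a) (as :: nat \<Rightarrow> mexp).
        (\<forall>i<t. fs i \<in> F \<and> rs i \<in> R \<and>
               snd (lmV R x n vle (fs i)) = snd (lmV R x n vle f) \<and>
               as i + fst (lmV R x n vle (fs i)) = fst (lmV R x n vle f)) \<and>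
        lcV R x n vle f = (\<Sum>i<t. rs i * sigpow R x n (as i) (lcV R x n vle (fs i))
                                   * cab R x n (as i) (fst (lmV R x n vle (fs i)))) \<and>
        h = f - (\<Sum>i<t. smultv (rs i * xmon x n (as i)) (fs i)))"

definition redstep :: "'a::ring_1 set \<Rightarrow> (nat \<Rightarrow> 'a) \<Rightarrow> nat \<Rightarrow> (mexp \<times> nat \<Rightarrow> mexp \<times> nat \<Rightarrow> bool)
     \<Rightarrow> (nat \<Rightarrow> 'a) set \<Rightarrow> (nat \<Rightarrow> 'a) \<Rightarrow> (nat \<Rightarrow> 'a) \<Rightarrow> bool" where
  "redstep R x n vle F f h \<longleftrightarrow> (f = 0 \<and> h = 0) \<or> red1 R x n vle F f h"

definition red_plus :: "'a::ring_1 set \<Rightarrow> (nat \<Rightarrow> 'a) \<Rightarrow> nat \<Rightarrow> (mexp \<times> nat \<Rightarrow> mexp \<times> nat \<Rightarrow> bool)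
     \<Rightarrow> (nat \<Rightarrow> 'a) set \<Rightarrow> (nat \<Rightarrow> 'a) \<Rightarrow> (nat \<Rightarrow> 'a) \<Rightarrow> bool" where
  "red_plus R x n vle F = (redstep R x n vle F)\<^sup>*\<^sup>*"

definition reducible :: "'a::ring_1 set \<Rightarrow> (nat \<Rightarrow> 'a) \<Rightarrow> nat \<Rightarrow> (mexp \<times> nat \<Rightarrow> mexp \<times> nat \<Rightarrow> bool)
     \<Rightarrow> (nat \<Rightarrow> 'a) set \<Rightarrow> (nat \<Rightarrow> 'a) \<Rightarrow> bool" where
  "reducible R x n vle F f \<longleftrightarrow> f \<noteq> 0 \<and> (\<exists>h. red1 R x n vle F f h)"

definition groebner_basis :: "'a::ring_1 set \<Rightarrow> (nat \<Rightarrow> 'a) \<Rightarrow> nat \<Rightarrow> (mexp \<times> nat \<Rightarrow> mexp \<times> nat \<Rightarrow> bool)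
     \<Rightarrow> (nat \<Rightarrow> 'a) set \<Rightarrow> (nat \<Rightarrow> 'a) set \<Rightarrow> bool" where
  "groebner_basis R x n vle M G \<longleftrightarrow>
     G \<noteq> {} \<and> finite G \<and> G \<subseteq> M \<and> 0 \<notin> G \<and>
     (\<forall>f\<in>M. f \<noteq> 0 \<longrightarrow> reducible R x n vle G f)"

(* X_F \<noteq> 0 for a nonempty finite F : all leading monomials have the same index *)
definition XF_nonzero :: "'a::ring_1 set \<Rightarrow> (nat \<Rightarrow> 'a) \<Rightarrow> nat \<Rightarrow> (mexp \<times> nat \<Rightarrow> mexp \<times> nat \<Rightarrow> bool)
     \<Rightarrow> (nat \<Rightarrow> 'a) set \<Rightarrow> bool" where
  "XF_nonzero R x n vle F \<longleftrightarrow> F \<noteq> {} \<and>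
     (\<forall>g\<in>F. \<forall>g'\<in>F. snd (lmV R x n vle g) = snd (lmV R x n vle g'))"

definition expXF :: "'a::ring_1 set \<Rightarrow> (nat \<Rightarrow> 'a) \<Rightarrow> nat \<Rightarrow> (mexp \<times> nat \<Rightarrow> mexp \<times> nat \<Rightarrow> bool)
     \<Rightarrow> (nat \<Rightarrow> 'a) set \<Rightarrow> mexp" where
  "expXF R x n vle F = (\<lambda>k. Max ((\<lambda>g. fst (lmV R x n vle g) k) ` F))"

definition gam :: "'a::ring_1 set \<Rightarrow> (nat \<Rightarrow> 'a) \<Rightarrow> nat \<Rightarrow> (mexp \<times> nat \<Rightarrow> mexp \<times> nat \<Rightarrow> bool)
     \<Rightarrow> (nat \<Rightarrow> 'a) set \<Rightarrow> (nat \<Rightarrow> 'a) \<Rightarrow> mexp" where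
  "gam R x n vle F g = (\<lambda>k. expXF R x n vle F k - fst (lmV R x n vle g) k)"

definition SF :: "'a::ring_1 set \<Rightarrow> (nat \<Rightarrow> 'a) \<Rightarrow> nat \<Rightarrow> (mexp \<times> nat \<Rightarrow> mexp \<times> nat \<Rightarrow> bool)
     \<Rightarrow> (nat \<Rightarrow> 'a) set \<Rightarrow> mexp \<Rightarrow> ((nat \<Rightarrow> 'a) \<Rightarrow> 'a) set" where
  "SF R x n vle F \<theta> = {b. (\<forall>g. b g \<in> R) \<and> (\<forall>g. g \<notin> F \<longrightarrow> b g = 0) \<and>
      (\<Sum>g\<in>F. b g * sigpow R x n (gam R x n vle F g + \<theta>) (lcV R x n vle g)
                 * cab R x n (gam R x n vle F g + \<theta>) (fst (lmV R x n vle g))) = 0}"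

definition Rspan :: "'a::ring_1 set \<Rightarrow> (('b \<Rightarrow> 'a)) set \<Rightarrow> ('b \<Rightarrow> 'a) set" where
  "Rspan R B = {(\<lambda>g. \<Sum>k\<in>B. r k * k g) | r. \<forall>k. r k \<in> R}"

end

theory Submission
  imports Defs
begin


definition uvec :: "nat \<Rightarrow> mexp" where "uvec j = (\<lambda>l. if l = j then 1 else 0)"


lemma sum_swap_list: fixes h :: "'c \<Rightarrow> 'b::comm_monoid_add"
  assumes "finite F" "\<forall>t\<in>set T. gof t \<in> F"
  shows "(\<Sum>g\<in>F. sum_list (map (\<lambda>t. if gof t = g then h t else 0) T)) = sum_list (map h T)"
  using assms(2)
proof (induction T)
  case Nil then show ?case by simp
next
  case (Cons t T)
  have "(\<Sum>g\<in>F. sum_list (map (\<lambda>t'. if gof t' = g then h t' else 0) (t # T))) =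
        (\<Sum>g\<in>F. (if gof t = g then h t else 0)) + (\<Sum>g\<in>F. sum_list (map (\<lambda>t'. if gof t' = g then h t' else 0) T))"
    by (simp add: sum.distrib)
  also have "(\<Sum>g\<in>F. (if gof t = g then h t else 0)) = h t" using Cons.prems assms(1) by (simp add: sum.delta)
  finally show ?case using Cons by simp
qed

lemma sum_list_if_filter: "sum_list (map (\<lambda>t. if P t then h t else 0) xs) = sum_list (map h (filter P xs))"
  by (induction xs) auto

lemma sum_list_filter_split: fixes h :: "'c \<Rightarrow> 'b::comm_monoid_add"
  shows "sum_list (map h xs) = sum_list (map h (filter P xs)) + sum_list (map h (filter (\<lambda>t. \<not> P t) xs))"
  by (induction xs) (auto simp: ac_simps)

lemma vsum_apply0: "(\<Sum>i\<in>I. (f i :: 'c \<Rightarrow> 'b::comm_monoid_add)) k = (\<Sum>i\<in>I. f i k)"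
  by (induction I rule: infinite_finite_induct) auto
lemma sum_list_apply0: "sum_list (map (f :: 'd \<Rightarrow> 'c \<Rightarrow> 'b::monoid_add) xs) k = sum_list (map (\<lambda>x. f x k) xs)"
  by (induction xs) auto

lemma smultv_add_left: "smultv (a + b) f = smultv a f + smultv b f"
  by (simp add: smultv_def fun_eq_iff distrib_right)
lemma smultv_zero_left[simp]: "smultv 0 f = 0" by (simp add: smultv_def fun_eq_iff)
lemma smultv_zero_right[simp]: "smultv a 0 = 0" by (simp add: smultv_def fun_eq_iff)
lemma smultv_assoc: "smultv a (smultv b f) = smultv (a * b) f" by (simp add: smultv_def fun_eq_iff mult.assoc)
lemma smultv_add_right: "smultv a (f + g) = smultv a f + smultv a g"
  by (simp add: smultv_def fun_eq_iff distrib_left)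
lemma smultv_sum_left: "smultv (\<Sum>i\<in>I. a i) f = (\<Sum>i\<in>I. smultv (a i) f)"
  by (simp add: smultv_def fun_eq_iff vsum_apply0 sum_distrib_right)
lemma smultv_sum_right: "smultv a (\<Sum>i\<in>I. f i) = (\<Sum>i\<in>I. smultv a (f i))"
  by (simp add: smultv_def fun_eq_iff vsum_apply0 sum_distrib_left)
lemma smultv_sum_list_left: "smultv (sum_list (map a xs)) f = sum_list (map (\<lambda>t. smultv (a t) f) xs)"
  by (simp add: smultv_def fun_eq_iff sum_list_apply0 sum_list_mult_const)
lemma smultv_sum_list_right: "smultv a (sum_list (map f xs)) = sum_list (map (\<lambda>t. smultv a (f t)) xs)"
  by (simp add: smultv_def fun_eq_iff sum_list_apply0 sum_list_const_mult)
lemma smultv_one[simp]: "smultv 1 f = f" by (simp add: smultv_def)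

locale pbw0 =
  fixes R :: "'a::ring_1 set" and x :: "nat \<Rightarrow> 'a" and n :: nat
  assumes pbw: "sigma_PBW R x n"
begin

abbreviation "cf \<equiv> coef R x n"
abbreviation "xm \<equiv> xmon x n"
abbreviation "td \<equiv> tdeg n"

lemma subR: "subring R" using pbw by (simp add: sigma_PBW_def)
lemma R0[simp]: "0 \<in> R" using subR by (simp add: subring_def)
lemma R1[simp]: "1 \<in> R" using subR by (simp add: subring_def)
lemma Radd[intro]: "a \<in> R \<Longrightarrow> b \<in> R \<Longrightarrow> a + b \<in> R" using subR by (simp add: subring_def)
lemma Rdiff[intro]: "a \<in> R \<Longrightarrow> b \<in> R \<Longrightarrow> a - b \<in> R" using subR by (simp add: subring_def)
lemma Rmult[intro]: "a \<in> R \<Longrightarrow> b \<in> R \<Longrightarrow> a * b \<in> R" using subR by (simp add: subring_def)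
lemma Rneg[intro]: "a \<in> R \<Longrightarrow> - a \<in> R" using Rdiff[of 0 a] by simp
lemma Rsum[intro]: "(\<And>i. i \<in> I \<Longrightarrow> f i \<in> R) \<Longrightarrow> sum f I \<in> R"
  by (induction I rule: infinite_finite_induct) auto

lemma coeffs_ex1: "\<exists>!c. is_coeffs R x n a c" using pbw by (simp add: sigma_PBW_def)
lemma is_coeffs_coef: "is_coeffs R x n a (cf a)"
  unfolding coef_def using theI'[OF coeffs_ex1[of a]] .
lemma coef_eqI: "is_coeffs R x n a c \<Longrightarrow> cf a = c"
  using is_coeffs_coef coeffs_ex1 by blast
lemma coef_R[simp]: "cf a \<alpha> \<in> R" using is_coeffs_coef[of a] by (simp add: is_coeffs_def)
lemma coef_exps: "cf a \<alpha> \<noteq> 0 \<Longrightarrow> \<alpha> \<in> exps n" using is_coeffs_coef[of a] by (simp add: is_coeffs_def)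
lemma coef_fin[simp]: "finite {\<alpha>. cf a \<alpha> \<noteq> 0}" using is_coeffs_coef[of a] by (simp add: is_coeffs_def)
lemma coef_not_exps: "\<alpha> \<notin> exps n \<Longrightarrow> cf a \<alpha> = 0" using coef_exps by blast
lemma coef_repr: "a = (\<Sum>\<alpha>\<in>{\<alpha>. cf a \<alpha> \<noteq> 0}. cf a \<alpha> * xm \<alpha>)"
  using is_coeffs_coef[of a] by (simp add: is_coeffs_def)

lemma coef_repr_S: assumes "finite S" "{\<alpha>. cf a \<alpha> \<noteq> 0} \<subseteq> S"
  shows "a = (\<Sum>\<alpha>\<in>S. cf a \<alpha> * xm \<alpha>)"
proof -
  have "(\<Sum>\<alpha>\<in>S. cf a \<alpha> * xm \<alpha>) = (\<Sum>\<alpha>\<in>{\<alpha>. cf a \<alpha> \<noteq> 0}. cf a \<alpha> * xm \<alpha>)"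
    by (rule sum.mono_neutral_right) (use assms in auto)
  then show ?thesis using coef_repr[of a] by simp
qed

lemma coef_eqI2: assumes "\<And>\<alpha>. c \<alpha> \<in> R" "\<And>\<alpha>. c \<alpha> \<noteq> 0 \<Longrightarrow> \<alpha> \<in> exps n" "finite S"
  "{\<alpha>. c \<alpha> \<noteq> 0} \<subseteq> S" "a = (\<Sum>\<alpha>\<in>S. c \<alpha> * xm \<alpha>)"
  shows "cf a = c"
proof (rule coef_eqI)
  have fin: "finite {\<alpha>. c \<alpha> \<noteq> 0}" using assms(3,4) finite_subset by blast
  have "(\<Sum>\<alpha>\<in>S. c \<alpha> * xm \<alpha>) = (\<Sum>\<alpha>\<in>{\<alpha>. c \<alpha> \<noteq> 0}. c \<alpha> * xm \<alpha>)"
    by (rule sum.mono_neutral_right) (use assms in auto)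
  then show "is_coeffs R x n a c" unfolding is_coeffs_def using assms fin by auto
qed

lemma coef_add: "cf (a + b) = (\<lambda>\<alpha>. cf a \<alpha> + cf b \<alpha>)"
proof -
  let ?S = "{\<alpha>. cf a \<alpha> \<noteq> 0} \<union> {\<alpha>. cf b \<alpha> \<noteq> 0}"
  have "a + b = (\<Sum>\<alpha>\<in>?S. cf a \<alpha> * xm \<alpha>) + (\<Sum>\<alpha>\<in>?S. cf b \<alpha> * xm \<alpha>)"
    using coef_repr_S[of ?S a] coef_repr_S[of ?S b] by auto
  also have "\<dots> = (\<Sum>\<alpha>\<in>?S. (cf a \<alpha> + cf b \<alpha>) * xm \<alpha>)"
    by (simp add: sum.distrib distrib_right)
  finally show ?thesis
    by (intro coef_eqI2[of _ ?S]) (auto simp: coef_not_exps intro: ccontr)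
qed

lemma coef_diff: "cf (a - b) = (\<lambda>\<alpha>. cf a \<alpha> - cf b \<alpha>)"
proof -
  let ?S = "{\<alpha>. cf a \<alpha> \<noteq> 0} \<union> {\<alpha>. cf b \<alpha> \<noteq> 0}"
  have "a - b = (\<Sum>\<alpha>\<in>?S. cf a \<alpha> * xm \<alpha>) - (\<Sum>\<alpha>\<in>?S. cf b \<alpha> * xm \<alpha>)"
    using coef_repr_S[of ?S a] coef_repr_S[of ?S b] by auto
  also have "\<dots> = (\<Sum>\<alpha>\<in>?S. (cf a \<alpha> - cf b \<alpha>) * xm \<alpha>)"
    by (simp add: sum_subtractf left_diff_distrib)
  finally show ?thesis
    by (intro coef_eqI2[of _ ?S]) (auto simp: coef_not_exps intro: ccontr)
qed

lemma coef_zero: "cf 0 = (\<lambda>_. 0)"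
  by (rule coef_eqI2[of _ "{}"]) auto

lemma coef_lmult: assumes "r \<in> R" shows "cf (r * a) = (\<lambda>\<alpha>. r * cf a \<alpha>)"
proof -
  let ?S = "{\<alpha>. cf a \<alpha> \<noteq> 0}"
  have "r * a = (\<Sum>\<alpha>\<in>?S. (r * cf a \<alpha>) * xm \<alpha>)"
    by (subst coef_repr[of a]) (simp add: sum_distrib_left mult.assoc)
  then show ?thesis using assms
    by (intro coef_eqI2[of _ ?S]) (auto simp: coef_not_exps intro: ccontr)
qed

lemma coef_sum: "finite I \<Longrightarrow> cf (\<Sum>i\<in>I. f i) = (\<lambda>\<alpha>. \<Sum>i\<in>I. cf (f i) \<alpha>)"
  by (induction I rule: finite_induct) (auto simp: coef_zero coef_add)

lemma coef_monom: assumes "r \<in> R" "\<alpha> \<in> exps n"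
  shows "cf (r * xm \<alpha>) = (\<lambda>\<beta>. if \<beta> = \<alpha> then r else 0)"
  by (rule coef_eqI2[of _ "{\<alpha>}"]) (use assms in \<open>auto split: if_splits\<close>)

lemma coef_eq0: "(\<And>\<alpha>. cf a \<alpha> = 0) \<Longrightarrow> a = 0"
  using coef_repr[of a] by simp

lemma coef_inj: "cf a = cf b \<Longrightarrow> a = b"
  using coef_repr[of a] coef_repr[of b] by simp

lemma exps0[simp]: "0 \<in> exps n" by (simp add: exps_def)
lemma xm0[simp]: "xm 0 = 1"
proof -
  have "\<And>L. prod_list (map (\<lambda>i. x i ^ (0::mexp) i) L) = 1"
    subgoal for L by (induction L) auto done
  then show ?thesis by (simp add: xmon_def)
qed

lemma coef_R_elem: "r \<in> R \<Longrightarrow> cf r = (\<lambda>\<beta>. if \<beta> = 0 then r else 0)"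
  using coef_monom[of r 0] by simp

definition Lo :: "nat \<Rightarrow> 'a set" where "Lo d = {a. \<forall>\<alpha>. cf a \<alpha> \<noteq> 0 \<longrightarrow> td \<alpha> < d}"

lemma Lo_coef: "a \<in> Lo d \<Longrightarrow> d \<le> td \<alpha> \<Longrightarrow> cf a \<alpha> = 0"
  unfolding Lo_def by force
lemma Lo_I: "(\<And>\<alpha>. d \<le> td \<alpha> \<Longrightarrow> cf a \<alpha> = 0) \<Longrightarrow> a \<in> Lo d"
  unfolding Lo_def using not_le by auto
lemma Lo_0: "a \<in> Lo 0 \<Longrightarrow> a = 0"
  using Lo_coef coef_eq0 by blast
lemma Lo_zero[simp]: "0 \<in> Lo d" by (rule Lo_I) (simp add: coef_zero)
lemma Lo_add[intro]: "a \<in> Lo d \<Longrightarrow> b \<in> Lo d \<Longrightarrow> a + b \<in> Lo d"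
  by (rule Lo_I) (simp add: coef_add Lo_coef)
lemma Lo_diff[intro]: "a \<in> Lo d \<Longrightarrow> b \<in> Lo d \<Longrightarrow> a - b \<in> Lo d"
  by (rule Lo_I) (simp add: coef_diff Lo_coef)
lemma Lo_lmult[intro]: "r \<in> R \<Longrightarrow> a \<in> Lo d \<Longrightarrow> r * a \<in> Lo d"
  by (rule Lo_I) (simp add: coef_lmult Lo_coef)
lemma Lo_sum[intro]: "(\<And>i. i \<in> I \<Longrightarrow> f i \<in> Lo d) \<Longrightarrow> sum f I \<in> Lo d"
  by (induction I rule: infinite_finite_induct) auto
lemma Lo_mono: "a \<in> Lo d \<Longrightarrow> d \<le> d' \<Longrightarrow> a \<in> Lo d'"
  by (rule Lo_I) (simp add: Lo_coef)
lemma Lo_monom: "r \<in> R \<Longrightarrow> \<alpha> \<in> exps n \<Longrightarrow> td \<alpha> < d \<Longrightarrow> r * xm \<alpha> \<in> Lo d"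
  by (rule Lo_I) (auto simp: coef_monom)
lemma Lo_R: "r \<in> R \<Longrightarrow> r \<in> Lo (Suc d)"
  by (rule Lo_I) (auto simp: coef_R_elem tdeg_def)

lemma td_add: "td (\<alpha> + \<beta>) = td \<alpha> + td \<beta>"
  by (simp add: tdeg_def sum.distrib)
lemma td_uvec: "j < n \<Longrightarrow> td (uvec j) = 1"
  by (simp add: tdeg_def uvec_def)
lemma td_0[simp]: "td 0 = 0" by (simp add: tdeg_def)
lemma exps_add[intro]: "\<alpha> \<in> exps n \<Longrightarrow> \<beta> \<in> exps n \<Longrightarrow> \<alpha> + \<beta> \<in> exps n"
  by (simp add: exps_def)
lemma uvec_exps[intro]: "j < n \<Longrightarrow> uvec j \<in> exps n"
  by (simp add: exps_def uvec_def)
lemma td_0_iff: assumes "\<alpha> \<in> exps n" shows "td \<alpha> = 0 \<longleftrightarrow> \<alpha> = 0"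
proof
  assume "td \<alpha> = 0"
  then have h: "\<forall>i<n. \<alpha> i = 0" by (simp add: tdeg_def)
  have "\<forall>i. \<alpha> i = 0"
  proof
    fix i show "\<alpha> i = 0" using h assms by (cases "i < n") (auto simp: exps_def)
  qed
  then show "\<alpha> = 0" by (simp add: fun_eq_iff)
qed simp

lemma prod_list_const1: "prod_list (map (\<lambda>i. 1::'a) L) = 1"
  by (induction L) simp_all

lemma xm_step: assumes "j < n" "\<forall>l<j. \<alpha> l = 0"
  shows "xm (\<alpha> + uvec j) = x j * xm \<alpha>"
proof -
  have split: "[0..<n] = [0..<j] @ j # [Suc j..<n]"
  proof -
    have s1: "[0..<n] = [0..<j] @ [j..<n]" using upt_add_eq_append[of 0 j "n - j"] assms(1) by simp
    have s2: "[j..<n] = j # [Suc j..<n]" using upt_conv_Cons assms(1) by simp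
    show ?thesis using s1 s2 by simp
  qed
  have one: "\<And>\<beta>. \<forall>l<j. \<beta> l = 0 \<Longrightarrow> prod_list (map (\<lambda>i. x i ^ \<beta> i) [0..<j]) = 1"
  proof -
    fix \<beta> :: mexp assume h: "\<forall>l<j. \<beta> l = 0"
    have "map (\<lambda>i. x i ^ \<beta> i) [0..<j] = map (\<lambda>i. 1) [0..<j]"
      using h by (intro map_cong) auto
    then show "prod_list (map (\<lambda>i. x i ^ \<beta> i) [0..<j]) = 1"
      by (metis prod_list_const1)
  qed
  have tail: "map (\<lambda>i. x i ^ (\<alpha> + uvec j) i) [Suc j..<n] = map (\<lambda>i. x i ^ \<alpha> i) [Suc j..<n]"
    by (intro map_cong) (auto simp: uvec_def)
  have a2: "\<forall>l<j. (\<alpha> + uvec j) l = 0" using assms(2) by (simp add: uvec_def)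
  show ?thesis
    unfolding xmon_def split
    by (simp only: map_append list.map prod_list.append prod_list.Cons one[OF a2] one[OF assms(2)] tail)
      (simp add: uvec_def mult.assoc)
qed

lemma exps_decomp: assumes "\<alpha> \<in> exps n" "\<alpha> \<noteq> 0"
  shows "\<exists>j \<alpha>'. j < n \<and> \<alpha> = \<alpha>' + uvec j \<and> (\<forall>l<j. \<alpha>' l = 0) \<and> \<alpha>' \<in> exps n \<and> td \<alpha> = Suc (td \<alpha>')"
proof -
  obtain i where i: "\<alpha> i \<noteq> 0" using assms(2) by (auto simp: fun_eq_iff)
  define j where "j = (LEAST l. \<alpha> l \<noteq> 0)"
  have aj: "\<alpha> j \<noteq> 0" unfolding j_def by (rule LeastI[of _ i]) (rule i)
  have below: "\<forall>l<j. \<alpha> l = 0"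
  proof (intro allI impI)
    fix l assume "l < j" then show "\<alpha> l = 0" using not_less_Least[of l "\<lambda>l. \<alpha> l \<noteq> 0"] unfolding j_def by simp
  qed
  have jn: "j < n" proof (rule ccontr)
    assume "\<not> j < n" then show False using aj assms(1) by (simp add: exps_def)
  qed
  define \<alpha>' where "\<alpha>' = \<alpha>(j := \<alpha> j - 1)"
  have eq: "\<alpha> = \<alpha>' + uvec j" using aj by (auto simp: \<alpha>'_def uvec_def fun_eq_iff)
  have e: "\<alpha>' \<in> exps n" using assms(1) jn by (auto simp: exps_def \<alpha>'_def)
  have t: "td \<alpha> = Suc (td \<alpha>')" using td_add[of \<alpha>' "uvec j"] td_uvec[OF jn] eq by simp
  have b: "\<forall>l<j. \<alpha>' l = 0" using below by (simp add: \<alpha>'_def)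
  show ?thesis by (rule exI[of _ j], rule exI[of _ \<alpha>']) (intro conjI jn eq b e t)
qed

lemma xm_uvec: "i < n \<Longrightarrow> xm (uvec i) = x i"
  using xm_step[of i 0] by simp

lemma pbw_ax2: "\<forall>i<n. \<forall>r\<in>R. r \<noteq> 0 \<longrightarrow> (\<exists>c\<in>R. c \<noteq> 0 \<and> x i * r - c * x i \<in> R)"
  using pbw[unfolded sigma_PBW_def] by (elim conjE) assumption
lemma pbw_ax3: "\<forall>i<n. \<forall>j<n. \<exists>c\<in>R. c \<noteq> 0 \<and>
        (\<exists>r0\<in>R. \<exists>r. (\<forall>k. r k \<in> R) \<and> x j * x i - c * x i * x j = r0 + (\<Sum>k<n. r k * x k))"
  using pbw[unfolded sigma_PBW_def] by (elim conjE) assumption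

lemma sig_ex: assumes "i < n" "r \<in> R" shows "\<exists>c\<in>R. x i * r - c * x i \<in> R"
proof (cases "r = 0")
  case True then show ?thesis by (intro bexI[of _ 0]) auto
next
  case False then show ?thesis using pbw_ax2 assms by blast
qed

lemma R_coef_uvec: "r \<in> R \<Longrightarrow> cf r (uvec i) = 0"
  by (simp add: coef_R_elem uvec_def fun_eq_iff)

lemma sig_uniq: assumes "i < n" "c \<in> R" "c' \<in> R" "x i * r - c * x i \<in> R" "x i * r - c' * x i \<in> R"
  shows "c = c'"
proof -
  have "(c' - c) * xm (uvec i) = (x i * r - c * x i) - (x i * r - c' * x i)"
    using assms(1) by (simp add: xm_uvec algebra_simps)
  then have "(c' - c) * xm (uvec i) \<in> R" using Rdiff[OF assms(4,5)] by simp
  then have "cf ((c' - c) * xm (uvec i)) (uvec i) = 0" by (rule R_coef_uvec)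
  then show ?thesis using assms by (simp add: coef_monom uvec_exps Rdiff)
qed

abbreviation "sg \<equiv> sig R x"
definition dl :: "nat \<Rightarrow> 'a \<Rightarrow> 'a" where "dl i r = x i * r - sg i r * x i"

lemma sig_prop: assumes "i < n" "r \<in> R" shows "sg i r \<in> R \<and> x i * r - sg i r * x i \<in> R"
proof -
  obtain c where c: "c \<in> R" "x i * r - c * x i \<in> R" using sig_ex[OF assms] by blast
  have "\<exists>!c. c \<in> R \<and> x i * r - c * x i \<in> R" using c sig_uniq[OF assms(1)] by blast
  then show ?thesis unfolding sig_def by (rule theI')
qed

lemma sg_R[simp,intro]: "i < n \<Longrightarrow> r \<in> R \<Longrightarrow> sg i r \<in> R" using sig_prop by blast
lemma dl_R[simp,intro]: "i < n \<Longrightarrow> r \<in> R \<Longrightarrow> dl i r \<in> R" using sig_prop by (simp add: dl_def)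
lemma x_r: "x i * r = sg i r * x i + dl i r" by (simp add: dl_def)
lemma sig_eq: "i < n \<Longrightarrow> r \<in> R \<Longrightarrow> c \<in> R \<Longrightarrow> x i * r - c * x i \<in> R \<Longrightarrow> sg i r = c"
  using sig_prop sig_uniq by blast

lemma sig_1: "i < n \<Longrightarrow> sg i 1 = 1" by (rule sig_eq) auto
lemma sig_mult: assumes "i < n" "r \<in> R" "s \<in> R" shows "sg i (r * s) = sg i r * sg i s"
proof (rule sig_eq)
  have "x i * (r * s) - sg i r * sg i s * x i = sg i r * dl i s + dl i r * s"
    by (simp add: mult.assoc[symmetric] x_r[of i r]) (simp add: mult.assoc x_r[of i s] algebra_simps)
  then show "x i * (r * s) - sg i r * sg i s * x i \<in> R" using assms by auto
qed (use assms in auto)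

definition linv :: "'a \<Rightarrow> bool" where "linv u \<longleftrightarrow> (\<exists>v\<in>R. v * u = 1)"
lemma linv_1: "linv 1" by (auto simp: linv_def intro: bexI[of _ 1])
lemma linv_mult: assumes "linv a" "linv b" shows "linv (a * b)"
proof -
  obtain v where v: "v \<in> R" "v * a = 1" using assms(1) by (auto simp: linv_def)
  obtain w where w: "w \<in> R" "w * b = 1" using assms(2) by (auto simp: linv_def)
  have "(w * v) * (a * b) = w * ((v * a) * b)" by (simp add: mult.assoc)
  also have "\<dots> = 1" using v w by simp
  finally show ?thesis using v w unfolding linv_def by (intro bexI[of _ "w * v"]) auto
qed
lemma linv_sig: assumes "i < n" "u \<in> R" "linv u" shows "linv (sg i u)"
proof -
  obtain v where v: "v \<in> R" "v * u = 1" using assms(3) by (auto simp: linv_def)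
  have "sg i v * sg i u = 1" using sig_mult[OF assms(1) v(1) assms(2)] v sig_1[OF assms(1)] by simp
  then show ?thesis unfolding linv_def using v assms by (intro bexI[of _ "sg i v"]) auto
qed
lemma linv_nz: "linv u \<Longrightarrow> u \<noteq> 0" by (auto simp: linv_def)

lemma lin_Lo2: assumes "r0 \<in> R" "\<forall>k. r k \<in> R" shows "r0 + (\<Sum>k<n. r k * x k) \<in> Lo 2"
proof -
  have "r k * x k \<in> Lo 2" if "k < n" for k
    using Lo_monom[of "r k" "uvec k" 2] that assms td_uvec[OF that] by (simp add: xm_uvec uvec_exps)
  then show ?thesis using assms Lo_R[of r0 1] by (auto simp: numeral_2_eq_2)
qed

lemma comm_rel: assumes "j < i" "i < n"
  shows "\<exists>c r0 r. c \<in> R \<and> linv c \<and> r0 \<in> R \<and> (\<forall>k. r k \<in> R) \<and>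
           x i * x j = c * x j * x i + (r0 + (\<Sum>k<n. r k * x k))"
proof -
  have jn: "j < n" using assms by simp
  obtain c r0 r where c: "c \<in> R" "r0 \<in> R" "\<forall>k. r k \<in> R"
    and e1: "x i * x j - c * x j * x i = r0 + (\<Sum>k<n. r k * x k)"
    using pbw_ax3[rule_format, OF jn assms(2)] by blast
  obtain c' r0' r' where c': "c' \<in> R" "r0' \<in> R" "\<forall>k. r' k \<in> R"
    and e2: "x j * x i - c' * x i * x j = r0' + (\<Sum>k<n. r' k * x k)"
    using pbw_ax3[rule_format, OF assms(2) jn] by blast
  define p where "p = r0 + (\<Sum>k<n. r k * x k)"
  define p' where "p' = r0' + (\<Sum>k<n. r' k * x k)"
  have e1': "x i * x j = c * x j * x i + p" using e1 unfolding p_def[symmetric] by (metis add.commute diff_add_cancel)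
  have e2': "x j * x i = c' * (x i * x j) + p'" using e2 unfolding p'_def[symmetric] by (metis add.commute diff_add_cancel mult.assoc)
  have key: "(1 - c' * c) * (x j * x i) = c' * p + p'"
  proof -
    have "x j * x i = c' * (x i * x j) + p'" by (rule e2')
    also have "\<dots> = c' * (c * x j * x i + p) + p'" by (simp only: e1')
    also have "\<dots> = (c' * c) * (x j * x i) + (c' * p + p')" by (simp add: distrib_left mult.assoc add.assoc)
    finally have h: "x j * x i = (c' * c) * (x j * x i) + (c' * p + p')" .
    have "(1 - c' * c) * (x j * x i) = x j * x i - (c' * c) * (x j * x i)" by (simp add: left_diff_distrib)
    also have "\<dots> = c' * p + p'" using h by (metis add_diff_cancel_left')
    finally show ?thesis .
  qed
  have lo: "c' * p + p' \<in> Lo 2" unfolding p_def p'_def using lin_Lo2 c c' by auto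
  have xx: "x j * x i = xm (uvec i + uvec j)"
    using xm_step[of j "uvec i"] assms jn xm_uvec[of i] by (simp add: uvec_def[of i])
  have t2: "td (uvec i + uvec j) = 2" using td_add td_uvec assms jn by simp
  have "cf ((1 - c' * c) * xm (uvec i + uvec j)) (uvec i + uvec j) = 0"
    using Lo_coef[OF lo, of "uvec i + uvec j"] t2 key xx by simp
  moreover have "cf ((1 - c' * c) * xm (uvec i + uvec j)) (uvec i + uvec j) = 1 - c' * c"
    using c c' assms jn by (simp add: coef_monom exps_add uvec_exps Rdiff Rmult)
  ultimately have "c' * c = 1" by simp
  then have "linv c" using c' by (auto simp: linv_def)
  then show ?thesis using c e1' unfolding p_def by blast
qed

definition Q1 :: "mexp \<Rightarrow> bool" where
  "Q1 \<alpha> \<longleftrightarrow> (\<forall>i<n. \<exists>u\<in>R. linv u \<and> x i * xm \<alpha> - u * xm (\<alpha> + uvec i) \<in> Lo (Suc (td \<alpha>)))"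

lemma xm_Lo: "\<alpha> \<in> exps n \<Longrightarrow> td \<alpha> < d \<Longrightarrow> xm \<alpha> \<in> Lo d" using Lo_monom[of 1] by simp

lemma x_c_xm: "x i * (c * xm \<alpha>) = sg i c * (x i * xm \<alpha>) + dl i c * xm \<alpha>"
proof -
  have "x i * (c * xm \<alpha>) = (x i * c) * xm \<alpha>" by (simp add: mult.assoc)
  also have "\<dots> = (sg i c * x i + dl i c) * xm \<alpha>" by (simp only: x_r)
  finally show ?thesis by (simp add: distrib_right mult.assoc)
qed

lemma Q2_from: assumes "\<forall>\<alpha>\<in>exps n. td \<alpha> \<le> D \<longrightarrow> Q1 \<alpha>" "i < n" "a \<in> Lo (Suc D)"
  shows "x i * a \<in> Lo (Suc (Suc D))"
proof -
  let ?S = "{\<alpha>. cf a \<alpha> \<noteq> 0}"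
  have "x i * a = (\<Sum>\<alpha>\<in>?S. x i * (cf a \<alpha> * xm \<alpha>))"
    by (subst coef_repr[of a]) (simp add: sum_distrib_left)
  also have "\<dots> \<in> Lo (Suc (Suc D))"
  proof (rule Lo_sum)
    fix \<alpha> assume "\<alpha> \<in> ?S"
    then have al1: "\<alpha> \<in> exps n" using coef_exps by auto
    have al2: "td \<alpha> \<le> D"
    proof (rule ccontr)
      assume "\<not> td \<alpha> \<le> D" then have "cf a \<alpha> = 0" using Lo_coef[OF assms(3), of \<alpha>] by simp
      then show False using \<open>\<alpha> \<in> ?S\<close> by simp
    qed
    note al = al1 al2
    obtain u where u: "u \<in> R" "x i * xm \<alpha> - u * xm (\<alpha> + uvec i) \<in> Lo (Suc (td \<alpha>))"
      using assms(1) al assms(2) unfolding Q1_def by blast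
    let ?c = "cf a \<alpha>"
    have "x i * (?c * xm \<alpha>) = (sg i ?c * u) * xm (\<alpha> + uvec i) + sg i ?c * (x i * xm \<alpha> - u * xm (\<alpha> + uvec i)) + dl i ?c * xm \<alpha>"
      by (simp add: x_c_xm algebra_simps)
    also have "\<dots> \<in> Lo (Suc (Suc D))"
    proof (intro Lo_add)
      show "(sg i ?c * u) * xm (\<alpha> + uvec i) \<in> Lo (Suc (Suc D))"
        using al u assms(2) td_add[of \<alpha> "uvec i"] td_uvec[OF assms(2)] by (intro Lo_monom) auto
      show "sg i ?c * (x i * xm \<alpha> - u * xm (\<alpha> + uvec i)) \<in> Lo (Suc (Suc D))"
        using al u assms(2) by (intro Lo_lmult Lo_mono[OF u(2)]) auto
      show "dl i ?c * xm \<alpha> \<in> Lo (Suc (Suc D))"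
        using al assms(2) by (intro Lo_monom) auto
    qed
    finally show "x i * (?c * xm \<alpha>) \<in> Lo (Suc (Suc D))" .
  qed
  finally show ?thesis .
qed

lemma Q1_all: "\<alpha> \<in> exps n \<Longrightarrow> Q1 \<alpha>"
proof (induction "td \<alpha>" arbitrary: \<alpha> rule: less_induct)
  case (less \<alpha>)
  show "Q1 \<alpha>" unfolding Q1_def
  proof (intro allI impI)
    fix i assume i: "i < n"
    show "\<exists>u\<in>R. linv u \<and> x i * xm \<alpha> - u * xm (\<alpha> + uvec i) \<in> Lo (Suc (td \<alpha>))"
    proof (cases "\<forall>l<i. \<alpha> l = 0")
      case True
      then have "x i * xm \<alpha> = xm (\<alpha> + uvec i)" using xm_step[OF i] by simp
      then show ?thesis by (intro bexI[of _ 1]) (auto simp: linv_1)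
    next
      case False
      then obtain l where l: "l < i" "\<alpha> l \<noteq> 0" by auto
      then have anz: "\<alpha> \<noteq> 0" by auto
      obtain j \<alpha>' where d: "j < n" "\<alpha> = \<alpha>' + uvec j" "\<forall>l<j. \<alpha>' l = 0" "\<alpha>' \<in> exps n" "td \<alpha> = Suc (td \<alpha>')"
        using exps_decomp[OF less.prems anz] by blast
      have ji: "j < i"
      proof (rule ccontr)
        assume "\<not> j < i"
        then have "l < j" using l by simp
        then have "\<alpha> l = 0" using d(2,3) by (simp add: uvec_def)
        then show False using l by simp
      qed
      have IH: "\<forall>\<beta>\<in>exps n. td \<beta> \<le> td \<alpha>' \<longrightarrow> Q1 \<beta>" using less.hyps d(5) by auto
      have Q2': "\<And>k a. k < n \<Longrightarrow> a \<in> Lo (Suc (td \<alpha>')) \<Longrightarrow> x k * a \<in> Lo (Suc (td \<alpha>))"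
        using Q2_from[OF IH] d(5) by simp
      obtain c r0 r where cr: "c \<in> R" "linv c" "r0 \<in> R" "\<forall>k. r k \<in> R"
        and rel: "x i * x j = c * x j * x i + (r0 + (\<Sum>k<n. r k * x k))"
        using comm_rel[OF ji i] by blast
      obtain u where u: "u \<in> R" "linv u" "x i * xm \<alpha>' - u * xm (\<alpha>' + uvec i) \<in> Lo (Suc (td \<alpha>'))"
        using IH d(4) i unfolding Q1_def by blast
      define lo where "lo = x i * xm \<alpha>' - u * xm (\<alpha>' + uvec i)"
      define p where "p = r0 + (\<Sum>k<n. r k * x k)"
      have xa: "xm \<alpha> = x j * xm \<alpha>'" using xm_step[OF d(1) d(3)] d(2) by simp
      have below2: "\<forall>l<j. (\<alpha>' + uvec i) l = 0" using d(3) ji by (simp add: uvec_def)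
      have xa2: "x j * xm (\<alpha>' + uvec i) = xm (\<alpha> + uvec i)"
      proof -
        have "\<alpha> + uvec i = (\<alpha>' + uvec i) + uvec j" using d(2) by (simp add: ac_simps)
        then show ?thesis by (simp only: xm_step[OF d(1) below2])
      qed
      have e1: "x i * xm \<alpha> = c * (x j * (x i * xm \<alpha>')) + p * xm \<alpha>'"
      proof -
        have "x i * xm \<alpha> = (x i * x j) * xm \<alpha>'" by (simp add: xa mult.assoc)
        also have "\<dots> = (c * x j * x i + p) * xm \<alpha>'" by (simp only: rel p_def)
        finally show ?thesis by (simp add: distrib_right mult.assoc)
      qed
      have e2: "x i * xm \<alpha>' = u * xm (\<alpha>' + uvec i) + lo" by (simp add: lo_def)
      have e3: "x j * (u * xm (\<alpha>' + uvec i)) = sg j u * xm (\<alpha> + uvec i) + dl j u * xm (\<alpha>' + uvec i)"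
        using x_c_xm[of j u] xa2 by simp
      have main: "x i * xm \<alpha> = (c * sg j u) * xm (\<alpha> + uvec i) +
                   (c * (dl j u * xm (\<alpha>' + uvec i)) + c * (x j * lo) + p * xm \<alpha>')"
        unfolding e1 e2 distrib_left e3 by (simp add: algebra_simps)
      have "c * (dl j u * xm (\<alpha>' + uvec i)) + c * (x j * lo) + p * xm \<alpha>' \<in> Lo (Suc (td \<alpha>))"
      proof (intro Lo_add)
        show "c * (dl j u * xm (\<alpha>' + uvec i)) \<in> Lo (Suc (td \<alpha>))"
          using cr u d i td_add[of \<alpha>' "uvec i"] td_uvec[OF i] by (intro Lo_lmult Lo_monom) auto
        show "c * (x j * lo) \<in> Lo (Suc (td \<alpha>))"
          using cr u d lo_def by (intro Lo_lmult Q2') auto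
        have "p * xm \<alpha>' = r0 * xm \<alpha>' + (\<Sum>k<n. r k * (x k * xm \<alpha>'))"
          by (simp add: p_def distrib_right sum_distrib_right mult.assoc)
        also have "\<dots> \<in> Lo (Suc (td \<alpha>))"
        proof (intro Lo_add Lo_sum)
          show "r0 * xm \<alpha>' \<in> Lo (Suc (td \<alpha>))" using cr d by (intro Lo_monom) auto
          fix k assume "k \<in> {..<n}"
          then show "r k * (x k * xm \<alpha>') \<in> Lo (Suc (td \<alpha>))"
            using cr d xm_Lo[of \<alpha>' "Suc (td \<alpha>')"] by (intro Lo_lmult Q2') auto
        qed
        finally show "p * xm \<alpha>' \<in> Lo (Suc (td \<alpha>))" .
      qed
      moreover have "c * sg j u \<in> R" "linv (c * sg j u)" using cr u d(1) by (auto intro: linv_mult linv_sig)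
      ultimately show ?thesis using main by (intro bexI[of _ "c * sg j u"]) (auto simp: algebra_simps)
    qed
  qed
qed

lemma x_Lo: assumes "i < n" "a \<in> Lo d" shows "x i * a \<in> Lo (Suc d)"
proof (cases d)
  case 0
  then have "a = 0" using assms(2) Lo_0 by simp
  then show ?thesis by simp
next
  case (Suc D) then show ?thesis using Q2_from[of D i a] Q1_all assms by auto
qed

lemma xm_decomp_step: assumes "\<alpha> \<in> exps n" "\<alpha> \<noteq> 0"
  obtains j \<alpha>' where "j < n" "\<alpha> = \<alpha>' + uvec j" "\<forall>l<j. \<alpha>' l = 0" "\<alpha>' \<in> exps n"
     "td \<alpha> = Suc (td \<alpha>')" "xm \<alpha> = x j * xm \<alpha>'"
proof -
  obtain j \<alpha>' where d: "j < n" "\<alpha> = \<alpha>' + uvec j" "\<forall>l<j. \<alpha>' l = 0" "\<alpha>' \<in> exps n" "td \<alpha> = Suc (td \<alpha>')"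
    using exps_decomp[OF assms] by blast
  have "xm \<alpha> = x j * xm \<alpha>'" using xm_step[OF d(1) d(3)] d(2) by simp
  then show ?thesis using d that by blast
qed

lemma xm_Lo_mult: "\<alpha> \<in> exps n \<Longrightarrow> a \<in> Lo d \<Longrightarrow> xm \<alpha> * a \<in> Lo (d + td \<alpha>)"
proof (induction "td \<alpha>" arbitrary: \<alpha> rule: less_induct)
  case (less \<alpha>)
  show ?case
  proof (cases "\<alpha> = 0")
    case True then show ?thesis using less.prems by simp
  next
    case False
    obtain j \<alpha>' where d: "j < n" "\<alpha>' \<in> exps n" "td \<alpha> = Suc (td \<alpha>')" "xm \<alpha> = x j * xm \<alpha>'"
      using xm_decomp_step[OF less.prems(1) False] by metis
    have "xm \<alpha>' * a \<in> Lo (d + td \<alpha>')" using less.hyps[of \<alpha>'] d less.prems by simp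
    then have "x j * (xm \<alpha>' * a) \<in> Lo (Suc (d + td \<alpha>'))" using x_Lo d(1) by blast
    then show ?thesis using d by (simp add: mult.assoc)
  qed
qed

lemma Lo_mult: assumes "a \<in> Lo d1" "b \<in> Lo (Suc d2)" shows "a * b \<in> Lo (d1 + d2)"
proof -
  let ?S = "{\<alpha>. cf a \<alpha> \<noteq> 0}"
  have "a * b = (\<Sum>\<alpha>\<in>?S. cf a \<alpha> * (xm \<alpha> * b))"
    by (subst coef_repr[of a]) (simp add: sum_distrib_right mult.assoc)
  also have "\<dots> \<in> Lo (d1 + d2)"
  proof (rule Lo_sum)
    fix \<alpha> assume h: "\<alpha> \<in> ?S"
    then have al1: "\<alpha> \<in> exps n" using coef_exps by auto
    have al2: "td \<alpha> < d1"
    proof (rule ccontr)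
      assume "\<not> td \<alpha> < d1" then have "cf a \<alpha> = 0" using Lo_coef[OF assms(1), of \<alpha>] by simp
      then show False using h by simp
    qed
    have "xm \<alpha> * b \<in> Lo (Suc d2 + td \<alpha>)" using xm_Lo_mult[OF al1 assms(2)] .
    then have "xm \<alpha> * b \<in> Lo (d1 + d2)" by (rule Lo_mono) (use al2 in simp)
    then show "cf a \<alpha> * (xm \<alpha> * b) \<in> Lo (d1 + d2)" by (rule Lo_lmult[OF coef_R])
  qed
  finally show ?thesis .
qed

lemma xm_xm: "\<alpha> \<in> exps n \<Longrightarrow> \<beta> \<in> exps n \<Longrightarrow>
   \<exists>u\<in>R. linv u \<and> xm \<alpha> * xm \<beta> - u * xm (\<alpha> + \<beta>) \<in> Lo (td \<alpha> + td \<beta>)"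
proof (induction "td \<alpha>" arbitrary: \<alpha> rule: less_induct)
  case (less \<alpha>)
  show ?case
  proof (cases "\<alpha> = 0")
    case True then show ?thesis by (intro bexI[of _ 1]) (auto simp: linv_1)
  next
    case False
    obtain j \<alpha>' where d: "j < n" "\<alpha> = \<alpha>' + uvec j" "\<alpha>' \<in> exps n" "td \<alpha> = Suc (td \<alpha>')" "xm \<alpha> = x j * xm \<alpha>'"
      using xm_decomp_step[OF less.prems(1) False] by metis
    obtain u where u: "u \<in> R" "linv u" "xm \<alpha>' * xm \<beta> - u * xm (\<alpha>' + \<beta>) \<in> Lo (td \<alpha>' + td \<beta>)"
      using less.hyps[of \<alpha>'] d less.prems by auto
    have ab: "\<alpha>' + \<beta> \<in> exps n" using d less.prems by auto
    obtain u' where u': "u' \<in> R" "linv u'" "x j * xm (\<alpha>' + \<beta>) - u' * xm (\<alpha>' + \<beta> + uvec j) \<in> Lo (Suc (td (\<alpha>' + \<beta>)))"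
      using Q1_all[OF ab] d(1) unfolding Q1_def by blast
    have eqa: "\<alpha>' + \<beta> + uvec j = \<alpha> + \<beta>" using d(2) by (simp add: ac_simps)
    define lo where "lo = xm \<alpha>' * xm \<beta> - u * xm (\<alpha>' + \<beta>)"
    define lo' where "lo' = x j * xm (\<alpha>' + \<beta>) - u' * xm (\<alpha> + \<beta>)"
    have "xm \<alpha> * xm \<beta> = x j * (u * xm (\<alpha>' + \<beta>) + lo)" by (simp add: d(5) lo_def mult.assoc)
    also have "\<dots> = sg j u * (x j * xm (\<alpha>' + \<beta>)) + dl j u * xm (\<alpha>' + \<beta>) + x j * lo"
      by (simp add: distrib_left x_c_xm)
    also have "\<dots> = (sg j u * u') * xm (\<alpha> + \<beta>) + (sg j u * lo' + dl j u * xm (\<alpha>' + \<beta>) + x j * lo)"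
      by (simp add: lo'_def algebra_simps)
    finally have main: "xm \<alpha> * xm \<beta> - (sg j u * u') * xm (\<alpha> + \<beta>) = sg j u * lo' + dl j u * xm (\<alpha>' + \<beta>) + x j * lo"
      by simp
    have tds: "td (\<alpha>' + \<beta>) = td \<alpha>' + td \<beta>" "td \<alpha> = Suc (td \<alpha>')" using td_add d by auto
    have "sg j u * lo' + dl j u * xm (\<alpha>' + \<beta>) + x j * lo \<in> Lo (td \<alpha> + td \<beta>)"
    proof (intro Lo_add)
      show "sg j u * lo' \<in> Lo (td \<alpha> + td \<beta>)" using u' u d(1) tds eqa unfolding lo'_def by (intro Lo_lmult) auto
      show "dl j u * xm (\<alpha>' + \<beta>) \<in> Lo (td \<alpha> + td \<beta>)" using u d(1) tds ab by (intro Lo_monom) auto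
      show "x j * lo \<in> Lo (td \<alpha> + td \<beta>)" using x_Lo[OF d(1) u(3)[folded lo_def]] tds by simp
    qed
    then show ?thesis using main u u' d(1) by (intro bexI[of _ "sg j u * u'"]) (auto intro: linv_mult linv_sig)
  qed
qed

lemma cf_Lo_top: "a \<in> Lo (td \<gamma>) \<Longrightarrow> r \<in> R \<Longrightarrow> \<gamma> \<in> exps n \<Longrightarrow> cf (r * xm \<gamma> + a) \<gamma> = r"
  by (simp add: coef_add coef_monom Lo_coef)

lemma cab_prop: assumes "\<alpha> \<in> exps n" "\<beta> \<in> exps n"
  shows "cab R x n \<alpha> \<beta> \<in> R \<and> linv (cab R x n \<alpha> \<beta>) \<and>
         xm \<alpha> * xm \<beta> - cab R x n \<alpha> \<beta> * xm (\<alpha> + \<beta>) \<in> Lo (td \<alpha> + td \<beta>)"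
proof -
  obtain u where u: "u \<in> R" "linv u" "xm \<alpha> * xm \<beta> - u * xm (\<alpha> + \<beta>) \<in> Lo (td \<alpha> + td \<beta>)"
    using xm_xm[OF assms] by blast
  have "xm \<alpha> * xm \<beta> = u * xm (\<alpha> + \<beta>) + (xm \<alpha> * xm \<beta> - u * xm (\<alpha> + \<beta>))" by simp
  then have "cab R x n \<alpha> \<beta> = u" unfolding cab_def
    using cf_Lo_top[of _ "\<alpha> + \<beta>" u] u assms td_add by (metis exps_add)
  then show ?thesis using u by simp
qed

lemma foldr_id_prefix: "\<forall>l\<in>set L. \<beta> l = 0 \<Longrightarrow> foldr (\<lambda>i f. (g i ^^ \<beta> i) \<circ> f) L h = h"
  by (induction L) auto

lemma sigpow_step: assumes "j < n" "\<forall>l<j. \<alpha> l = 0"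
  shows "sigpow R x n (\<alpha> + uvec j) r = sg j (sigpow R x n \<alpha> r)"
proof -
  have split: "[0..<n] = [0..<j] @ j # [Suc j..<n]"
  proof -
    have s1: "[0..<n] = [0..<j] @ [j..<n]" using upt_add_eq_append[of 0 j "n - j"] assms(1) by simp
    have s2: "[j..<n] = j # [Suc j..<n]" using upt_conv_Cons assms(1) by simp
    show ?thesis using s1 s2 by simp
  qed
  have a2: "\<forall>l<j. (\<alpha> + uvec j) l = 0" using assms(2) by (simp add: uvec_def)
  have tail: "foldr (\<lambda>i f. (sg i ^^ (\<alpha> + uvec j) i) \<circ> f) [Suc j..<n] id = foldr (\<lambda>i f. (sg i ^^ \<alpha> i) \<circ> f) [Suc j..<n] id"
    by (intro foldr_cong) (auto simp: uvec_def)
  have p1: "foldr (\<lambda>i f. (sg i ^^ (\<alpha> + uvec j) i) \<circ> f) [0..<j] h = h" for h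
    using a2 by (intro foldr_id_prefix) auto
  have p2: "foldr (\<lambda>i f. (sg i ^^ \<alpha> i) \<circ> f) [0..<j] h = h" for h
    using assms(2) by (intro foldr_id_prefix) auto
  show ?thesis unfolding sigpow_def split foldr_append
    by (simp only: p1 p2 foldr.simps o_apply tail) (simp add: uvec_def)
qed

lemma sigpow_0: "sigpow R x n 0 r = r"
proof -
  have "foldr (\<lambda>i f. (sg i ^^ (0::mexp) i) \<circ> f) [0..<n] id = id" by (rule foldr_id_prefix) simp
  then show ?thesis by (simp only: sigpow_def) simp
qed

lemma sigpow_prop: "\<alpha> \<in> exps n \<Longrightarrow> r \<in> R \<Longrightarrow>
   sigpow R x n \<alpha> r \<in> R \<and> xm \<alpha> * r - sigpow R x n \<alpha> r * xm \<alpha> \<in> Lo (td \<alpha>)"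
proof (induction "td \<alpha>" arbitrary: \<alpha> rule: less_induct)
  case (less \<alpha>)
  show ?case
  proof (cases "\<alpha> = 0")
    case True then show ?thesis using less.prems by (simp add: sigpow_0)
  next
    case False
    obtain j \<alpha>' where d: "j < n" "\<alpha> = \<alpha>' + uvec j" "\<forall>l<j. \<alpha>' l = 0" "\<alpha>' \<in> exps n" "td \<alpha> = Suc (td \<alpha>')" "xm \<alpha> = x j * xm \<alpha>'"
      using xm_decomp_step[OF less.prems(1) False] by metis
    define s where "s = sigpow R x n \<alpha>' r"
    have s: "s \<in> R" "xm \<alpha>' * r - s * xm \<alpha>' \<in> Lo (td \<alpha>')"
      using less.hyps[of \<alpha>'] d less.prems unfolding s_def by auto
    have sp: "sigpow R x n \<alpha> r = sg j s" using sigpow_step[OF d(1) d(3)] d(2) s_def by simp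
    define lo where "lo = xm \<alpha>' * r - s * xm \<alpha>'"
    have "xm \<alpha> * r = x j * (s * xm \<alpha>' + lo)" by (simp add: d(6) lo_def mult.assoc)
    also have "\<dots> = sg j s * xm \<alpha> + (dl j s * xm \<alpha>' + x j * lo)"
      by (simp add: distrib_left x_c_xm d(6) add.assoc)
    finally have main: "xm \<alpha> * r - sg j s * xm \<alpha> = dl j s * xm \<alpha>' + x j * lo" by simp
    have "dl j s * xm \<alpha>' + x j * lo \<in> Lo (td \<alpha>)"
    proof (intro Lo_add)
      show "dl j s * xm \<alpha>' \<in> Lo (td \<alpha>)" using s d by (intro Lo_monom) auto
      show "x j * lo \<in> Lo (td \<alpha>)" using x_Lo[OF d(1) s(2)[folded lo_def]] d by simp
    qed
    then show ?thesis using main sp s d(1) by simp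
  qed
qed

lemma pbw_main: assumes "\<alpha> \<in> exps n" "\<beta> \<in> exps n" "c \<in> R"
  shows "xm \<alpha> * (c * xm \<beta>) - (sigpow R x n \<alpha> c * cab R x n \<alpha> \<beta>) * xm (\<alpha> + \<beta>) \<in> Lo (td \<alpha> + td \<beta>)"
proof -
  define s where "s = sigpow R x n \<alpha> c"
  define k where "k = cab R x n \<alpha> \<beta>"
  have s: "s \<in> R" "xm \<alpha> * c - s * xm \<alpha> \<in> Lo (td \<alpha>)" using sigpow_prop[OF assms(1,3)] s_def by auto
  have k: "k \<in> R" "xm \<alpha> * xm \<beta> - k * xm (\<alpha> + \<beta>) \<in> Lo (td \<alpha> + td \<beta>)" using cab_prop[OF assms(1,2)] k_def by auto
  define lo1 where "lo1 = xm \<alpha> * c - s * xm \<alpha>"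
  define lo2 where "lo2 = xm \<alpha> * xm \<beta> - k * xm (\<alpha> + \<beta>)"
  have "xm \<alpha> * (c * xm \<beta>) = (s * xm \<alpha> + lo1) * xm \<beta>" by (simp add: lo1_def mult.assoc)
  also have "\<dots> = s * (k * xm (\<alpha> + \<beta>) + lo2) + lo1 * xm \<beta>" by (simp add: lo2_def distrib_right mult.assoc)
  also have "\<dots> = (s * k) * xm (\<alpha> + \<beta>) + (s * lo2 + lo1 * xm \<beta>)" by (simp add: algebra_simps)
  finally have main: "xm \<alpha> * (c * xm \<beta>) - (s * k) * xm (\<alpha> + \<beta>) = s * lo2 + lo1 * xm \<beta>" by simp
  have "s * lo2 + lo1 * xm \<beta> \<in> Lo (td \<alpha> + td \<beta>)"
  proof (intro Lo_add)
    show "s * lo2 \<in> Lo (td \<alpha> + td \<beta>)" using s k lo2_def by auto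
    show "lo1 * xm \<beta> \<in> Lo (td \<alpha> + td \<beta>)" using Lo_mult[of lo1 "td \<alpha>" "xm \<beta>" "td \<beta>"] s(2) lo1_def xm_Lo[OF assms(2)] by simp
  qed
  then show ?thesis using main s_def k_def by simp
qed

definition lowt :: "mexp \<Rightarrow> 'a \<Rightarrow> mexp \<Rightarrow> 'a" where
  "lowt \<alpha> c \<delta> = xm \<alpha> * (c * xm \<delta>) - (sigpow R x n \<alpha> c * cab R x n \<alpha> \<delta>) * xm (\<alpha> + \<delta>)"

lemma lowt_Lo: "\<alpha> \<in> exps n \<Longrightarrow> \<delta> \<in> exps n \<Longrightarrow> c \<in> R \<Longrightarrow> lowt \<alpha> c \<delta> \<in> Lo (td \<alpha> + td \<delta>)"
  unfolding lowt_def by (rule pbw_main)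

lemma sigcab_R: "\<alpha> \<in> exps n \<Longrightarrow> \<delta> \<in> exps n \<Longrightarrow> c \<in> R \<Longrightarrow> sigpow R x n \<alpha> c * cab R x n \<alpha> \<delta> \<in> R"
  using sigpow_prop cab_prop by blast

lemma cf_term: assumes "\<alpha> \<in> exps n" "r \<in> R"
  shows "cf (r * xm \<alpha> * a) \<gamma> = (\<Sum>\<delta>\<in>{\<delta>. cf a \<delta> \<noteq> 0}.
            (if \<gamma> = \<alpha> + \<delta> then r * (sigpow R x n \<alpha> (cf a \<delta>) * cab R x n \<alpha> \<delta>) else 0)
            + r * cf (lowt \<alpha> (cf a \<delta>) \<delta>) \<gamma>)"
proof -
  let ?S = "{\<delta>. cf a \<delta> \<noteq> 0}"
  let ?t = "\<lambda>\<delta>. sigpow R x n \<alpha> (cf a \<delta>) * cab R x n \<alpha> \<delta>"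
  have "r * xm \<alpha> * a = (\<Sum>\<delta>\<in>?S. r * (xm \<alpha> * (cf a \<delta> * xm \<delta>)))"
    by (subst coef_repr[of a]) (simp add: sum_distrib_left mult.assoc)
  also have "\<dots> = (\<Sum>\<delta>\<in>?S. (r * ?t \<delta>) * xm (\<alpha> + \<delta>) + r * lowt \<alpha> (cf a \<delta>) \<delta>)"
    by (intro sum.cong) (auto simp: lowt_def algebra_simps)
  finally have e: "r * xm \<alpha> * a = \<dots>" .
  have "cf ((r * ?t \<delta>) * xm (\<alpha> + \<delta>) + r * lowt \<alpha> (cf a \<delta>) \<delta>) \<gamma> =
        (if \<gamma> = \<alpha> + \<delta> then r * ?t \<delta> else 0) + r * cf (lowt \<alpha> (cf a \<delta>) \<delta>) \<gamma>" if "\<delta> \<in> ?S" for \<delta>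
  proof -
    have d: "\<delta> \<in> exps n" using that coef_exps by auto
    have rt: "r * ?t \<delta> \<in> R" using sigcab_R[OF assms(1) d coef_R] assms(2) by auto
    have mm: "cf ((r * ?t \<delta>) * xm (\<alpha> + \<delta>)) = (\<lambda>\<beta>. if \<beta> = \<alpha> + \<delta> then r * ?t \<delta> else 0)"
      using coef_monom[OF rt exps_add[OF assms(1) d]] .
    show ?thesis by (simp only: coef_add mm coef_lmult[OF assms(2)])
  qed
  then show ?thesis unfolding e by (simp add: coef_sum)
qed

end

definition Mo :: "nat \<Rightarrow> nat \<Rightarrow> (mexp \<times> nat) set" where "Mo n m = exps n \<times> {..<m}"

locale pbw1 = pbw0 R x n for R :: "'a::ring_1 set" and x n +
  fixes mle :: "mexp \<Rightarrow> mexp \<Rightarrow> bool" and m :: nat and vle :: "mexp \<times> nat \<Rightarrow> mexp \<times> nat \<Rightarrow> bool"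
  assumes mord: "mon_order R x n mle" and vord: "vmon_order R x n mle m vle"
begin

abbreviation "MM \<equiv> Mo n m"
abbreviation "vc \<equiv> vcoef R x n"
abbreviation "lmv \<equiv> lmV R x n vle"
abbreviation "lcv \<equiv> lcV R x n vle"
abbreviation "spw \<equiv> sigpow R x n"
abbreviation "cb \<equiv> cab R x n"

lemma mo_parts_1: "\<forall>\<alpha>\<in>exps n. mle \<alpha> \<alpha>"
  using mord[unfolded mon_order_def] by (elim conjE) assumption
lemma mo_parts_2: "\<forall>\<alpha>\<in>exps n. \<forall>\<beta>\<in>exps n. mle \<alpha> \<beta> \<and> mle \<beta> \<alpha> \<longrightarrow> \<alpha> = \<beta>"
  using mord[unfolded mon_order_def] by (elim conjE) assumption
lemma mo_parts_3: "\<forall>\<alpha>\<in>exps n. \<forall>\<beta>\<in>exps n. tdeg n \<alpha> < tdeg n \<beta> \<longrightarrow> mle \<alpha> \<beta>"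
  using mord[unfolded mon_order_def] by (elim conjE) assumption
lemma vo_parts_1: "\<forall>X\<in>exps n \<times> {..<m}. vle X X"
  using vord[unfolded vmon_order_def Let_def] by (elim conjE) assumption
lemma vo_parts_2: "\<forall>X\<in>exps n \<times> {..<m}. \<forall>Y\<in>exps n \<times> {..<m}. vle X Y \<and> vle Y X \<longrightarrow> X = Y"
  using vord[unfolded vmon_order_def Let_def] by (elim conjE) assumption
lemma vo_parts_3: "\<forall>X\<in>exps n \<times> {..<m}. \<forall>Y\<in>exps n \<times> {..<m}. \<forall>Z\<in>exps n \<times> {..<m}. vle X Y \<and> vle Y Z \<longrightarrow> vle X Z"
  using vord[unfolded vmon_order_def Let_def] by (elim conjE) assumption
lemma vo_parts_4: "\<forall>X\<in>exps n \<times> {..<m}. \<forall>Y\<in>exps n \<times> {..<m}. vle X Y \<or> vle Y X"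
  using vord[unfolded vmon_order_def Let_def] by (elim conjE) assumption
lemma vo_parts_5: "\<forall>\<alpha>\<in>exps n. \<forall>\<beta>\<in>exps n. \<forall>\<gamma>\<in>exps n. \<forall>i<m. \<forall>j<m. vle (\<alpha>, i) (\<beta>, j) \<longrightarrow>
        vle (lmA R x n mle (xmon x n \<gamma> * xmon x n \<alpha>), i) (lmA R x n mle (xmon x n \<gamma> * xmon x n \<beta>), j)"
  using vord[unfolded vmon_order_def Let_def] by (elim conjE) assumption
lemma vo_parts_6: "\<forall>X\<in>exps n \<times> {..<m}. \<forall>Y\<in>exps n \<times> {..<m}. tdeg n (fst X) < tdeg n (fst Y) \<longrightarrow> vle X Y"
  using vord[unfolded vmon_order_def Let_def] by (elim conjE) assumption

lemma mle_refl: "\<alpha> \<in> exps n \<Longrightarrow> mle \<alpha> \<alpha>" using mo_parts_1 by blast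
lemma mle_antisym: "\<alpha> \<in> exps n \<Longrightarrow> \<beta> \<in> exps n \<Longrightarrow> mle \<alpha> \<beta> \<Longrightarrow> mle \<beta> \<alpha> \<Longrightarrow> \<alpha> = \<beta>"
  using mo_parts_2 by blast
lemma mle_deg: "\<alpha> \<in> exps n \<Longrightarrow> \<beta> \<in> exps n \<Longrightarrow> td \<alpha> < td \<beta> \<Longrightarrow> mle \<alpha> \<beta>"
  using mo_parts_3 by blast

lemma vle_refl: "X \<in> MM \<Longrightarrow> vle X X" using vo_parts_1 unfolding Mo_def by blast
lemma vle_antisym: "X \<in> MM \<Longrightarrow> Y \<in> MM \<Longrightarrow> vle X Y \<Longrightarrow> vle Y X \<Longrightarrow> X = Y"
  using vo_parts_2 unfolding Mo_def by blast
lemma vle_trans: "X \<in> MM \<Longrightarrow> Y \<in> MM \<Longrightarrow> Z \<in> MM \<Longrightarrow> vle X Y \<Longrightarrow> vle Y Z \<Longrightarrow> vle X Z"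
  using vo_parts_3 unfolding Mo_def by blast
lemma vle_total: "X \<in> MM \<Longrightarrow> Y \<in> MM \<Longrightarrow> vle X Y \<or> vle Y X"
  using vo_parts_4 unfolding Mo_def by blast
lemma vle_deg: "X \<in> MM \<Longrightarrow> Y \<in> MM \<Longrightarrow> td (fst X) < td (fst Y) \<Longrightarrow> vle X Y"
  using vo_parts_6 unfolding Mo_def by blast
lemma vle_mult: "\<alpha> \<in> exps n \<Longrightarrow> \<beta> \<in> exps n \<Longrightarrow> \<gamma> \<in> exps n \<Longrightarrow> i < m \<Longrightarrow> j < m \<Longrightarrow> vle (\<alpha>, i) (\<beta>, j) \<Longrightarrow>
    vle (lmA R x n mle (xm \<gamma> * xm \<alpha>), i) (lmA R x n mle (xm \<gamma> * xm \<beta>), j)"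
  using vo_parts_5 by blast

lemma vle_td: assumes "X \<in> MM" "Y \<in> MM" "vle Y X" shows "td (fst Y) \<le> td (fst X)"
proof (rule ccontr)
  assume h: "\<not> td (fst Y) \<le> td (fst X)"
  then have "vle X Y" using vle_deg assms by simp
  then have "X = Y" using vle_antisym assms by blast
  then show False using h by simp
qed

lemma lmA_xm: assumes "\<alpha> \<in> exps n" "\<beta> \<in> exps n"
  shows "lmA R x n mle (xm \<alpha> * xm \<beta>) = \<alpha> + \<beta>"
proof -
  define p where "p = xm \<alpha> * xm \<beta>"
  have cp: "cb \<alpha> \<beta> \<in> R" "linv (cb \<alpha> \<beta>)" "p - cb \<alpha> \<beta> * xm (\<alpha> + \<beta>) \<in> Lo (td \<alpha> + td \<beta>)"
    using cab_prop[OF assms] p_def by auto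
  have ab: "\<alpha> + \<beta> \<in> exps n" using assms by auto
  have tab: "td (\<alpha> + \<beta>) = td \<alpha> + td \<beta>" by (rule td_add)
  have cfp: "cf p \<gamma> = (if \<gamma> = \<alpha> + \<beta> then cb \<alpha> \<beta> else 0) + cf (p - cb \<alpha> \<beta> * xm (\<alpha> + \<beta>)) \<gamma>" for \<gamma>
    using cp ab by (simp add: coef_diff coef_monom)
  have top: "cf p (\<alpha> + \<beta>) \<noteq> 0"
    using cfp[of "\<alpha> + \<beta>"] Lo_coef[OF cp(3)] tab linv_nz[OF cp(2)] by simp
  have below: "mle \<gamma> (\<alpha> + \<beta>)" if "cf p \<gamma> \<noteq> 0" for \<gamma>
  proof -
    have g: "\<gamma> \<in> exps n" using that coef_exps by auto
    show ?thesis
    proof (cases "\<gamma> = \<alpha> + \<beta>")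
      case True then show ?thesis using mle_refl ab by simp
    next
      case False
      then have "cf (p - cb \<alpha> \<beta> * xm (\<alpha> + \<beta>)) \<gamma> \<noteq> 0" using cfp[of \<gamma>] that by simp
      then have "\<not> td \<alpha> + td \<beta> \<le> td \<gamma>" using Lo_coef[OF cp(3), of \<gamma>] by blast
      then have "td \<gamma> < td (\<alpha> + \<beta>)" using tab by simp
      then show ?thesis using mle_deg g ab by blast
    qed
  qed
  have "(THE \<gamma>. cf p \<gamma> \<noteq> 0 \<and> (\<forall>\<delta>. cf p \<delta> \<noteq> 0 \<longrightarrow> mle \<delta> \<gamma>)) = \<alpha> + \<beta>"
  proof (rule the_equality)
    show "cf p (\<alpha> + \<beta>) \<noteq> 0 \<and> (\<forall>\<delta>. cf p \<delta> \<noteq> 0 \<longrightarrow> mle \<delta> (\<alpha> + \<beta>))" using top below by blast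
    fix \<gamma> assume h: "cf p \<gamma> \<noteq> 0 \<and> (\<forall>\<delta>. cf p \<delta> \<noteq> 0 \<longrightarrow> mle \<delta> \<gamma>)"
    then have "mle (\<alpha> + \<beta>) \<gamma>" "mle \<gamma> (\<alpha> + \<beta>)" "\<gamma> \<in> exps n" using top below coef_exps by auto
    then show "\<gamma> = \<alpha> + \<beta>" using mle_antisym ab by blast
  qed
  then show ?thesis unfolding lmA_def p_def .
qed


lemma vsum_apply: "(\<Sum>i\<in>I. (f i :: nat \<Rightarrow> 'a)) k = (\<Sum>i\<in>I. f i k)"
  by (induction I rule: infinite_finite_induct) auto

lemma vc_add: "vc (f + g) Y = vc f Y + vc g Y" by (simp add: vcoef_def coef_add)
lemma vc_diff: "vc (f - g) Y = vc f Y - vc g Y" by (simp add: vcoef_def coef_diff)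
lemma vc_zero[simp]: "vc 0 Y = 0" by (simp add: vcoef_def coef_zero)
lemma vc_add'[simp]: "vc (\<lambda>a. f a + g a) Y = vc f Y + vc g Y" using vc_add[of f g] by (simp add: plus_fun_def)
lemma vc_diff'[simp]: "vc (\<lambda>a. f a - g a) Y = vc f Y - vc g Y" using vc_diff[of f g] by (simp add: fun_diff_def)
lemma vc_zero'[simp]: "vc (\<lambda>a. 0) Y = 0" by (simp add: vcoef_def coef_zero)
lemma vc_sum: "finite I \<Longrightarrow> vc (\<Sum>i\<in>I. f i) Y = (\<Sum>i\<in>I. vc (f i) Y)"
  by (simp add: vcoef_def vsum_apply coef_sum)
lemma vc_smult: "r \<in> R \<Longrightarrow> vc (smultv r f) Y = r * vc f Y"
  by (simp add: vcoef_def smultv_def coef_lmult)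

lemma vecs_add[intro]: "(f::nat \<Rightarrow> 'a) \<in> vecs m \<Longrightarrow> g \<in> vecs m \<Longrightarrow> f + g \<in> vecs m" by (simp add: vecs_def)
lemma vecs_diff[intro]: "(f::nat \<Rightarrow> 'a) \<in> vecs m \<Longrightarrow> g \<in> vecs m \<Longrightarrow> f - g \<in> vecs m" by (simp add: vecs_def)
lemma vecs_zero[simp]: "(0::nat \<Rightarrow> 'a) \<in> vecs m" by (simp add: vecs_def)
lemma vecs_smult[intro]: "(f::nat \<Rightarrow> 'a) \<in> vecs m \<Longrightarrow> smultv a f \<in> vecs m" by (simp add: vecs_def smultv_def)
lemma vecs_sum[intro]: "(\<And>i. i \<in> I \<Longrightarrow> (f i :: nat \<Rightarrow> 'a) \<in> vecs m) \<Longrightarrow> (\<Sum>i\<in>I. f i) \<in> vecs m"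
  by (induction I rule: infinite_finite_induct) auto

lemma vc_Mo: assumes "f \<in> vecs m" "vc f Y \<noteq> 0" shows "Y \<in> MM"
proof -
  have "f (snd Y) \<noteq> 0" using assms(2) by (auto simp: vcoef_def coef_zero)
  then have "snd Y < m" using assms(1) by (auto simp: vecs_def) (meson not_le)
  moreover have "fst Y \<in> exps n" using assms(2) coef_exps by (auto simp: vcoef_def)
  ultimately show ?thesis by (auto simp: Mo_def mem_Times_iff)
qed

lemma vec_eq0: assumes "\<And>Y. vc f Y = 0" shows "f = 0"
proof
  fix k show "f k = 0 k" using assms[of "(_, k)"] coef_eq0[of "f k"] by (simp add: vcoef_def)
qed

lemma Mo_fin_ne_max: "finite S \<Longrightarrow> S \<noteq> {} \<Longrightarrow> S \<subseteq> MM \<Longrightarrow> \<exists>X\<in>S. \<forall>Y\<in>S. vle Y X"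
proof (induction S rule: finite_ne_induct)
  case (singleton X) then show ?case using vle_refl by auto
next
  case (insert Z S)
  then obtain X where X: "X \<in> S" "\<forall>Y\<in>S. vle Y X" by auto
  have Z: "Z \<in> MM" "S \<subseteq> MM" using insert.prems by auto
  show ?case
  proof (cases "vle Z X")
    case True then show ?thesis using X by auto
  next
    case False
    then have "vle X Z" using vle_total[of X Z] X Z by auto
    have "\<forall>Y\<in>insert Z S. vle Y Z"
    proof
      fix Y assume "Y \<in> insert Z S"
      then show "vle Y Z"
      proof
        assume "Y = Z" then show ?thesis using vle_refl Z by simp
      next
        assume Y: "Y \<in> S"
        then have "vle Y X" using X by auto
        then show ?thesis using vle_trans[of Y X Z] Y X Z \<open>vle X Z\<close> by auto
      qed
    qed
    then show ?thesis by blast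
  qed
qed

lemma vsupp_fin: assumes "f \<in> vecs m" shows "finite {Y. vc f Y \<noteq> 0}"
proof -
  have "{Y. vc f Y \<noteq> 0} \<subseteq> (\<Union>k<m. {\<alpha>. cf (f k) \<alpha> \<noteq> 0} \<times> {k})"
    using vc_Mo[OF assms] by (force simp: Mo_def vcoef_def)
  then show ?thesis by (rule finite_subset) auto
qed

lemma lmV_prop: assumes "f \<in> vecs m" "f \<noteq> 0"
  shows "lmv f \<in> MM" "vc f (lmv f) \<noteq> 0" "\<And>Y. vc f Y \<noteq> 0 \<Longrightarrow> vle Y (lmv f)"
proof -
  let ?S = "{Y. vc f Y \<noteq> 0}"
  have ne: "?S \<noteq> {}" using vec_eq0[of f] assms(2) by auto
  obtain X where X: "X \<in> ?S" "\<forall>Y\<in>?S. vle Y X"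
    using Mo_fin_ne_max[OF vsupp_fin[OF assms(1)] ne] vc_Mo[OF assms(1)] by blast
  have XM: "X \<in> MM" using X vc_Mo[OF assms(1)] by auto
  have "lmv f = X" unfolding lmV_def
  proof (rule the_equality)
    show "vc f X \<noteq> 0 \<and> (\<forall>Y. vc f Y \<noteq> 0 \<longrightarrow> vle Y X)" using X by auto
    fix Z assume Z: "vc f Z \<noteq> 0 \<and> (\<forall>Y. vc f Y \<noteq> 0 \<longrightarrow> vle Y Z)"
    then have "Z \<in> MM" using vc_Mo[OF assms(1)] by auto
    moreover have "vle Z X" using Z X(2) by blast
    moreover have "vle X Z" using Z X(1) by blast
    ultimately show "Z = X" using XM vle_antisym by blast
  qed
  then show "lmv f \<in> MM" "vc f (lmv f) \<noteq> 0" "\<And>Y. vc f Y \<noteq> 0 \<Longrightarrow> vle Y (lmv f)" using X XM by auto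
qed

lemma lmV_eqI: assumes "f \<in> vecs m" "vc f X \<noteq> 0" "\<And>Y. vc f Y \<noteq> 0 \<Longrightarrow> vle Y X"
  shows "lmv f = X"
proof -
  have "f \<noteq> 0" using assms(2) by auto
  note L = lmV_prop[OF assms(1) this]
  have "X \<in> MM" using vc_Mo assms by blast
  moreover have "vle (lmv f) X" using assms(3)[OF L(2)] .
  moreover have "vle X (lmv f)" using L(3)[OF assms(2)] .
  ultimately show ?thesis using L(1) vle_antisym by blast
qed

lemma term_lemma: assumes g: "g \<in> vecs m" "g \<noteq> 0" and lm: "lmv g = (\<beta>, k)" and r: "r \<in> R" and a: "\<alpha> \<in> exps n"
  shows "smultv (r * xm \<alpha>) g \<in> vecs m"
    and "(\<alpha> + \<beta>, k) \<in> MM"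
    and "\<And>Y. vc (smultv (r * xm \<alpha>) g) Y \<noteq> 0 \<Longrightarrow> vle Y (\<alpha> + \<beta>, k)"
    and "vc (smultv (r * xm \<alpha>) g) (\<alpha> + \<beta>, k) = r * spw \<alpha> (lcv g) * cb \<alpha> \<beta>"
proof -
  note L = lmV_prop[OF g]
  have bk: "\<beta> \<in> exps n" "k < m" using L(1) lm by (auto simp: Mo_def)
  show "smultv (r * xm \<alpha>) g \<in> vecs m" using g by auto
  show abM: "(\<alpha> + \<beta>, k) \<in> MM" using a bk by (auto simp: Mo_def)
  have vcT: "vc (smultv (r * xm \<alpha>) g) (\<gamma>, k') = (\<Sum>\<delta>\<in>{\<delta>. cf (g k') \<delta> \<noteq> 0}.
            (if \<gamma> = \<alpha> + \<delta> then r * (spw \<alpha> (cf (g k') \<delta>) * cb \<alpha> \<delta>) else 0)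
            + r * cf (lowt \<alpha> (cf (g k') \<delta>) \<delta>) \<gamma>)" for \<gamma> k'
    unfolding vcoef_def smultv_def using cf_term[OF a r, of "g k'" \<gamma>] by simp
  have supp: "vle (\<delta>, k') (\<beta>, k) \<and> (\<delta>, k') \<in> MM" if "cf (g k') \<delta> \<noteq> 0" for \<delta> k'
    using L(3)[of "(\<delta>, k')"] vc_Mo[OF g(1), of "(\<delta>, k')"] that lm by (simp add: vcoef_def)
  show "vle Y (\<alpha> + \<beta>, k)" if Y: "vc (smultv (r * xm \<alpha>) g) Y \<noteq> 0" for Y
  proof -
    obtain \<gamma> k' where Yeq: "Y = (\<gamma>, k')" by (cases Y)
    obtain \<delta> where d: "cf (g k') \<delta> \<noteq> 0"
      and nz: "(if \<gamma> = \<alpha> + \<delta> then r * (spw \<alpha> (cf (g k') \<delta>) * cb \<alpha> \<delta>) else 0)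
            + r * cf (lowt \<alpha> (cf (g k') \<delta>) \<delta>) \<gamma> \<noteq> 0"
      using Y vcT[of \<gamma> k'] Yeq by (auto elim: sum.not_neutral_contains_not_neutral)
    have s: "vle (\<delta>, k') (\<beta>, k)" "(\<delta>, k') \<in> MM" using supp[OF d] by auto
    have de: "\<delta> \<in> exps n" "k' < m" using s(2) by (auto simp: Mo_def)
    have tdd: "td \<delta> \<le> td \<beta>" using vle_td[OF _ s(2) s(1)] bk by (auto simp: Mo_def)
    show ?thesis
    proof (cases "\<gamma> = \<alpha> + \<delta>")
      case True
      have "vle (lmA R x n mle (xm \<alpha> * xm \<delta>), k') (lmA R x n mle (xm \<alpha> * xm \<beta>), k)"
        using vle_mult[OF de(1) bk(1) a de(2) bk(2) s(1)] .
      then show ?thesis using True Yeq lmA_xm[OF a de(1)] lmA_xm[OF a bk(1)] by simp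
    next
      case False
      then have c: "cf (lowt \<alpha> (cf (g k') \<delta>) \<delta>) \<gamma> \<noteq> 0" using nz by auto
      then have ge: "\<gamma> \<in> exps n" using coef_exps by auto
      have "\<not> td \<alpha> + td \<delta> \<le> td \<gamma>" using c Lo_coef[OF lowt_Lo[OF a de(1) coef_R]] by blast
      then have "td \<gamma> < td (\<alpha> + \<beta>)" using tdd td_add[of \<alpha> \<beta>] by simp
      then show ?thesis using vle_deg[of "(\<gamma>, k')" "(\<alpha> + \<beta>, k)"] Yeq ge de abM by (simp add: Mo_def)
    qed
  qed
  let ?S = "{\<delta>. cf (g k) \<delta> \<noteq> 0}"
  let ?h = "\<lambda>\<delta>. (if \<alpha> + \<beta> = \<alpha> + \<delta> then r * (spw \<alpha> (cf (g k) \<delta>) * cb \<alpha> \<delta>) else 0)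
            + r * cf (lowt \<alpha> (cf (g k) \<delta>) \<delta>) (\<alpha> + \<beta>)"
  have lcg: "lcv g = cf (g k) \<beta>" by (simp add: lcV_def lm vcoef_def)
  have bS: "\<beta> \<in> ?S" using L(2) lm by (simp add: vcoef_def)
  have zero_low: "cf (lowt \<alpha> (cf (g k) \<delta>) \<delta>) (\<alpha> + \<beta>) = 0" if "\<delta> \<in> ?S" for \<delta>
  proof -
    have s: "vle (\<delta>, k) (\<beta>, k)" "(\<delta>, k) \<in> MM" using supp that by auto
    have de: "\<delta> \<in> exps n" using s(2) by (auto simp: Mo_def)
    have tdd: "td \<delta> \<le> td \<beta>" using vle_td[OF _ s(2) s(1)] bk by (auto simp: Mo_def)
    show ?thesis using Lo_coef[OF lowt_Lo[OF a de coef_R]] tdd td_add[of \<alpha> \<beta>] by simp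
  qed
  have rest: "?h \<delta> = 0" if "\<delta> \<in> ?S - {\<beta>}" for \<delta>
    using that zero_low by auto
  have "vc (smultv (r * xm \<alpha>) g) (\<alpha> + \<beta>, k) = sum ?h ?S" using vcT by simp
  also have "\<dots> = ?h \<beta> + sum ?h (?S - {\<beta>})" using bS by (simp add: sum.remove)
  also have "sum ?h (?S - {\<beta>}) = 0" using rest by (intro sum.neutral) blast
  also have "?h \<beta> = r * (spw \<alpha> (cf (g k) \<beta>) * cb \<alpha> \<beta>)"
    by (simp only: simp_thms if_True zero_low[OF bS] mult_zero_right add_0_right)
  finally show "vc (smultv (r * xm \<alpha>) g) (\<alpha> + \<beta>, k) = r * spw \<alpha> (lcv g) * cb \<alpha> \<beta>"
    unfolding lcg by (simp only: mult.assoc add_0_right)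
qed


lemma vc_sum_list: "vc (sum_list (map F xs)) Y = sum_list (map (\<lambda>x. vc (F x) Y) xs)"
  by (induction xs) (simp_all only: list.map sum_list.Cons sum_list.Nil vc_add vc_zero)

lemma red1_lower: assumes f: "f \<in> vecs m" and G: "G \<subseteq> vecs m" "0 \<notin> G" and r: "red1 R x n vle G f h"
  shows "h \<in> vecs m" "\<And>Y. vc h Y \<noteq> 0 \<Longrightarrow> vle Y (lmv f) \<and> Y \<noteq> lmv f"
proof -
  obtain t :: nat and fs rs as where
    c: "\<forall>i<t. fs i \<in> G \<and> rs i \<in> R \<and> snd (lmv (fs i)) = snd (lmv f) \<and> as i + fst (lmv (fs i)) = fst (lmv f)"
    and lc: "lcv f = (\<Sum>i<t. rs i * spw (as i) (lcv (fs i)) * cb (as i) (fst (lmv (fs i))))"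
    and h: "h = f - (\<Sum>i<t. smultv (rs i * xm (as i)) (fs i))"
    using r unfolding red1_def by (elim conjE exE) (rule that; assumption)
  have fnz: "f \<noteq> 0" using r unfolding red1_def by blast
  note Lf = lmV_prop[OF f fnz]
  have fe: "fst (lmv f) \<in> exps n" using Lf(1) by (auto simp: Mo_def)
  have each: "fs i \<in> vecs m" "fs i \<noteq> 0" "lmv (fs i) = (fst (lmv (fs i)), snd (lmv (fs i)))" "as i \<in> exps n"
     "(as i + fst (lmv (fs i)), snd (lmv (fs i))) = lmv f" "rs i \<in> R" if "i < t" for i
  proof -
    show "fs i \<in> vecs m" "fs i \<noteq> 0" "rs i \<in> R" using c that G by auto
    show "lmv (fs i) = (fst (lmv (fs i)), snd (lmv (fs i)))" by simp
    have e: "as i + fst (lmv (fs i)) = fst (lmv f)" using c that by auto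
    have "as i l = 0" if "n \<le> l" for l
    proof -
      have "(as i + fst (lmv (fs i))) l = 0" using e fe that by (simp add: exps_def)
      then show ?thesis by simp
    qed
    then show "as i \<in> exps n" by (simp add: exps_def)
    show "(as i + fst (lmv (fs i)), snd (lmv (fs i))) = lmv f" using c that by (simp add: prod_eq_iff)
  qed
  let ?T = "\<lambda>i. smultv (rs i * xm (as i)) (fs i)"
  have T_le: "vle Y (lmv f)" if "i < t" "vc (?T i) Y \<noteq> 0" for i Y
  proof -
    have "vle Y (as i + fst (lmv (fs i)), snd (lmv (fs i)))"
      using term_lemma(3)[OF each(1)[OF that(1)] each(2)[OF that(1)] each(3)[OF that(1)] each(6)[OF that(1)] each(4)[OF that(1)] that(2)] .
    then show ?thesis using each(5)[OF that(1)] by simp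
  qed
  have T_top: "vc (?T i) (lmv f) = rs i * spw (as i) (lcv (fs i)) * cb (as i) (fst (lmv (fs i)))" if "i < t" for i
    using term_lemma(4)[OF each(1)[OF that] each(2)[OF that] each(3)[OF that] each(6)[OF that] each(4)[OF that]]
      each(5)[OF that] by simp
  show hv: "h \<in> vecs m" using h f each(1) by auto
  fix Y assume Y: "vc h Y \<noteq> 0"
  have vch: "vc h Z = vc f Z - (\<Sum>i<t. vc (?T i) Z)" for Z using h by (simp add: vc_diff vc_sum)
  show "vle Y (lmv f) \<and> Y \<noteq> lmv f"
  proof
    show "vle Y (lmv f)"
    proof (cases "vc f Y = 0")
      case True
      then have "(\<Sum>i<t. vc (?T i) Y) \<noteq> 0" using Y vch by auto
      then obtain i where "i \<in> {..<t}" "vc (?T i) Y \<noteq> 0" by (rule sum.not_neutral_contains_not_neutral)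
      then show ?thesis using T_le by auto
    next
      case False then show ?thesis using Lf(3) by blast
    qed
    have "vc h (lmv f) = 0" using vch[of "lmv f"] T_top lc by (simp add: lcV_def)
    then show "Y \<noteq> lmv f" using Y by auto
  qed
qed

definition mu :: "mexp \<times> nat \<Rightarrow> nat" where "mu X = card {Y \<in> MM. vle Y X}"

lemma exps_td_fin: "finite {\<alpha> \<in> exps n. td \<alpha> \<le> d}"
proof -
  let ?f = "\<lambda>\<alpha>::mexp. map \<alpha> [0..<n]"
  have inj: "inj_on ?f (exps n)"
  proof
    fix \<alpha> \<beta> assume a: "\<alpha> \<in> exps n" "\<beta> \<in> exps n" "?f \<alpha> = ?f \<beta>"
    show "\<alpha> = \<beta>"
    proof
      fix l show "\<alpha> l = \<beta> l" using a by (cases "l < n") (auto simp: exps_def)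
    qed
  qed
  have "?f ` {\<alpha> \<in> exps n. td \<alpha> \<le> d} \<subseteq> {xs. set xs \<subseteq> {0..d} \<and> length xs = n}"
  proof clarsimp
    fix \<alpha> i assume a: "\<alpha> \<in> exps n" "td \<alpha> \<le> d" "i < n"
    have "\<alpha> i \<le> (\<Sum>l<n. \<alpha> l)" using a(3) by (intro member_le_sum) auto
    then show "\<alpha> i \<le> d" using a(2) by (simp add: tdeg_def)
  qed
  then have "finite (?f ` {\<alpha> \<in> exps n. td \<alpha> \<le> d})" by (rule finite_subset) (simp add: finite_lists_length_eq)
  then show ?thesis using inj by (rule finite_imageD[OF _ inj_on_subset]) auto
qed

lemma below_fin: "X \<in> MM \<Longrightarrow> finite {Y \<in> MM. vle Y X}"
proof -
  assume X: "X \<in> MM"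
  have "{Y \<in> MM. vle Y X} \<subseteq> {\<alpha> \<in> exps n. td \<alpha> \<le> td (fst X)} \<times> {..<m}"
    using vle_td[OF X] by (auto simp: Mo_def)
  then show ?thesis by (rule finite_subset) (simp add: exps_td_fin)
qed

lemma mu_less: assumes "X \<in> MM" "Y \<in> MM" "vle Y X" "Y \<noteq> X" shows "mu Y < mu X"
proof -
  have "{Z \<in> MM. vle Z Y} \<subset> {Z \<in> MM. vle Z X}"
  proof
    show "{Z \<in> MM. vle Z Y} \<subseteq> {Z \<in> MM. vle Z X}" using vle_trans assms by blast
    have "X \<notin> {Z \<in> MM. vle Z Y}" using vle_antisym assms by blast
    moreover have "X \<in> {Z \<in> MM. vle Z X}" using vle_refl assms by blast
    ultimately show "{Z \<in> MM. vle Z Y} \<noteq> {Z \<in> MM. vle Z X}" by blast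
  qed
  then show ?thesis unfolding mu_def by (rule psubset_card_mono[OF below_fin[OF assms(1)]])
qed


definition tterm :: "'a \<times> mexp \<times> (nat \<Rightarrow> 'a) \<Rightarrow> (nat \<Rightarrow> 'a)" where
  "tterm tr = smultv (fst tr * xm (fst (snd tr))) (snd (snd tr))"
definition tval :: "('a \<times> mexp \<times> (nat \<Rightarrow> 'a)) list \<Rightarrow> (nat \<Rightarrow> 'a)" where
  "tval ts = sum_list (map tterm ts)"
definition bnd :: "'a \<times> mexp \<times> (nat \<Rightarrow> 'a) \<Rightarrow> mexp \<times> nat" where
  "bnd tr = (fst (snd tr) + fst (lmv (snd (snd tr))), snd (lmv (snd (snd tr))))"
definition tcoef :: "'a \<times> mexp \<times> (nat \<Rightarrow> 'a) \<Rightarrow> 'a" where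
  "tcoef tr = fst tr * spw (fst (snd tr)) (lcv (snd (snd tr))) * cb (fst (snd tr)) (fst (lmv (snd (snd tr))))"
definition tvalid :: "(nat \<Rightarrow> 'a) set \<Rightarrow> ('a \<times> mexp \<times> (nat \<Rightarrow> 'a)) list \<Rightarrow> bool" where
  "tvalid G ts \<longleftrightarrow> (\<forall>tr\<in>set ts. fst tr \<in> R \<and> fst (snd tr) \<in> exps n \<and> snd (snd tr) \<in> G)"

lemma tval_Nil[simp]: "tval [] = 0" by (simp add: tval_def)
lemma tval_Cons[simp]: "tval (tr # ts) = tterm tr + tval ts" by (simp add: tval_def)
lemma tval_append[simp]: "tval (a @ b) = tval a + tval b" by (simp add: tval_def)
lemma tvalid_Cons[simp]: "tvalid G (tr # ts) \<longleftrightarrow> (fst tr \<in> R \<and> fst (snd tr) \<in> exps n \<and> snd (snd tr) \<in> G) \<and> tvalid G ts"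
  by (simp add: tvalid_def)
lemma tvalid_append[simp]: "tvalid G (a @ b) \<longleftrightarrow> tvalid G a \<and> tvalid G b"
  by (auto simp: tvalid_def)

lemma tterm_props: assumes G: "G \<subseteq> vecs m" "0 \<notin> G" and tr: "fst tr \<in> R" "fst (snd tr) \<in> exps n" "snd (snd tr) \<in> G"
  shows "tterm tr \<in> vecs m" "bnd tr \<in> MM" "\<And>Y. vc (tterm tr) Y \<noteq> 0 \<Longrightarrow> vle Y (bnd tr)"
    "vc (tterm tr) (bnd tr) = tcoef tr"
proof -
  let ?g = "snd (snd tr)"
  have g: "?g \<in> vecs m" "?g \<noteq> 0" using G tr by auto
  have lm: "lmv ?g = (fst (lmv ?g), snd (lmv ?g))" by simp
  note T = term_lemma[OF g lm tr(1) tr(2)]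
  show "tterm tr \<in> vecs m" using T(1) by (simp add: tterm_def)
  show "bnd tr \<in> MM" using T(2) by (simp add: bnd_def)
  show "\<And>Y. vc (tterm tr) Y \<noteq> 0 \<Longrightarrow> vle Y (bnd tr)" using T(3) by (simp add: tterm_def bnd_def)
  show "vc (tterm tr) (bnd tr) = tcoef tr" using T(4) by (simp add: tterm_def bnd_def tcoef_def)
qed

lemma tval_vecs: "G \<subseteq> vecs m \<Longrightarrow> 0 \<notin> G \<Longrightarrow> tvalid G ts \<Longrightarrow> tval ts \<in> vecs m"
  by (induction ts) (auto intro: tterm_props(1))

lemma tval_supp: assumes G: "G \<subseteq> vecs m" "0 \<notin> G"
  shows "tvalid G ts \<Longrightarrow> X \<in> MM \<Longrightarrow> \<forall>tr\<in>set ts. vle (bnd tr) X \<Longrightarrow> vc (tval ts) Y \<noteq> 0 \<Longrightarrow> vle Y X"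
proof (induction ts)
  case Nil then show ?case by simp
next
  case (Cons tr ts)
  have v: "fst tr \<in> R" "fst (snd tr) \<in> exps n" "snd (snd tr) \<in> G" using Cons.prems by auto
  show ?case
  proof (cases "vc (tterm tr) Y = 0")
    case True
    then have "vc (tval ts) Y \<noteq> 0" using Cons.prems by (simp add: vc_add)
    then show ?thesis using Cons by simp
  next
    case False
    then have "vle Y (bnd tr)" using tterm_props(3)[OF G v] by blast
    moreover have "Y \<in> MM" using False vc_Mo tterm_props(1)[OF G v] by blast
    ultimately show ?thesis using vle_trans[of Y "bnd tr" X] tterm_props(2)[OF G v] Cons.prems by simp
  qed
qed

lemma tval_coef: assumes G: "G \<subseteq> vecs m" "0 \<notin> G"
  shows "tvalid G ts \<Longrightarrow> X \<in> MM \<Longrightarrow> \<forall>tr\<in>set ts. vle (bnd tr) X \<Longrightarrow>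
    vc (tval ts) X = sum_list (map (\<lambda>tr. if bnd tr = X then tcoef tr else 0) ts)"
proof (induction ts)
  case Nil then show ?case by simp
next
  case (Cons tr ts)
  have v: "fst tr \<in> R" "fst (snd tr) \<in> exps n" "snd (snd tr) \<in> G" using Cons.prems by auto
  have "vc (tterm tr) X = (if bnd tr = X then tcoef tr else 0)"
  proof (cases "bnd tr = X")
    case True then show ?thesis using tterm_props(4)[OF G v] by simp
  next
    case False
    show ?thesis
    proof (rule ccontr)
      assume "vc (tterm tr) X \<noteq> (if bnd tr = X then tcoef tr else 0)"
      then have "vc (tterm tr) X \<noteq> 0" using False by simp
      then have "vle X (bnd tr)" using tterm_props(3)[OF G v] by blast
      moreover have "vle (bnd tr) X" using Cons.prems by simp
      ultimately show False using vle_antisym tterm_props(2)[OF G v] Cons.prems False by blast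
    qed
  qed
  then show ?case using Cons by (simp add: vc_add)
qed

lemma redplus_repr: assumes G: "G \<subseteq> vecs m" "0 \<notin> G"
  and rp: "red_plus R x n vle G v w" and w: "w = 0" and v: "v \<in> vecs m"
  shows "\<exists>ts. tvalid G ts \<and> tval ts = v \<and> (\<forall>tr\<in>set ts. vle (bnd tr) (lmv v)) \<and> (v = 0 \<longrightarrow> ts = [])"
  using rp[unfolded red_plus_def] w v
proof (induction rule: converse_rtranclp_induct)
  case base
  then show ?case by (intro exI[of _ "[]"]) (simp add: tvalid_def)
next
  case (step v v')
  show ?case
  proof (cases "v = 0")
    case True then show ?thesis by (intro exI[of _ "[]"]) (simp add: tvalid_def)
  next
    case False
    then have r1: "red1 R x n vle G v v'" using step.hyps(1) by (simp add: redstep_def)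
    note low = red1_lower[OF step.prems(2) G r1]
    obtain ts' where ts': "tvalid G ts'" "tval ts' = v'" "\<forall>tr\<in>set ts'. vle (bnd tr) (lmv v')" "v' = 0 \<longrightarrow> ts' = []"
      using step.IH step.prems low(1) by blast
    obtain t :: nat and fs rs as where
      c: "\<forall>i<t. fs i \<in> G \<and> rs i \<in> R \<and> snd (lmv (fs i)) = snd (lmv v) \<and> as i + fst (lmv (fs i)) = fst (lmv v)"
      and h: "v' = v - (\<Sum>i<t. smultv (rs i * xm (as i)) (fs i))"
      using r1 unfolding red1_def by (elim conjE exE) (rule that; assumption)
    note Lv = lmV_prop[OF step.prems(2) False]
    have fe: "fst (lmv v) \<in> exps n" using Lv(1) by (auto simp: Mo_def)
    have ase: "as i \<in> exps n" if "i < t" for i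
    proof -
      have e: "as i + fst (lmv (fs i)) = fst (lmv v)" using c that by auto
      have "as i l = 0" if "n \<le> l" for l
      proof -
        have "(as i + fst (lmv (fs i))) l = 0" using e fe that by (simp add: exps_def)
        then show ?thesis by simp
      qed
      then show "as i \<in> exps n" by (simp add: exps_def)
    qed
    define tss where "tss = map (\<lambda>i. (rs i, as i, fs i)) [0..<t]"
    have vs: "tvalid G tss" using c ase by (auto simp: tss_def tvalid_def)
    have vals: "tval tss = (\<Sum>i<t. smultv (rs i * xm (as i)) (fs i))"
      by (simp add: tval_def tss_def tterm_def interv_sum_list_conv_sum_set_nat atLeast0LessThan comp_def)
    have bs: "bnd tr = lmv v" if "tr \<in> set tss" for tr
      using that c by (auto simp: tss_def bnd_def prod_eq_iff)
    have LM: "lmv v \<in> MM" using Lv(1) .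
    have b2: "vle (bnd tr) (lmv v)" if "tr \<in> set ts'" for tr
    proof -
      have "v' \<noteq> 0" using that ts'(4) by auto
      note Lv' = lmV_prop[OF low(1) this]
      have "vle (lmv v') (lmv v)" using low(2)[OF Lv'(2)] by blast
      moreover have "vle (bnd tr) (lmv v')" using ts'(3) that by blast
      moreover have "bnd tr \<in> MM" using ts'(1) that tterm_props(2)[OF G] by (auto simp: tvalid_def)
      ultimately show ?thesis using vle_trans Lv'(1) LM by blast
    qed
    show ?thesis
    proof (intro exI[of _ "tss @ ts'"] conjI)
      show "tvalid G (tss @ ts')" using vs ts'(1) by simp
      show "tval (tss @ ts') = v" using vals ts'(2) h by simp
      show "\<forall>tr\<in>set (tss @ ts'). vle (bnd tr) (lmv v)"
      proof
        fix tr assume "tr \<in> set (tss @ ts')"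
        then consider "tr \<in> set tss" | "tr \<in> set ts'" by auto
        then show "vle (bnd tr) (lmv v)"
        proof cases
          case 1 then show ?thesis using bs vle_refl[OF LM] by simp
        next
          case 2 then show ?thesis using b2 by simp
        qed
      qed
      show "v = 0 \<longrightarrow> tss @ ts' = []" using False by simp
    qed
  qed
qed


lemma Rsum_list: "(\<And>t. t \<in> set xs \<Longrightarrow> h t \<in> R) \<Longrightarrow> sum_list (map h xs) \<in> R"
  by (induction xs) auto

lemma tval_concat: "tval (concat xss) = sum_list (map tval xss)"
  by (induction xss) auto

definition sc :: "'a \<Rightarrow> ('a \<times> mexp \<times> (nat \<Rightarrow> 'a)) list \<Rightarrow> ('a \<times> mexp \<times> (nat \<Rightarrow> 'a)) list" where
  "sc \<rho> ts = map (\<lambda>tr. (\<rho> * fst tr, snd tr)) ts"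

lemma tval_sc: "tval (sc \<rho> ts) = smultv \<rho> (tval ts)"
  by (simp add: tval_def sc_def tterm_def smultv_sum_list_right smultv_assoc mult.assoc comp_def)
lemma tvalid_sc: "\<rho> \<in> R \<Longrightarrow> tvalid G ts \<Longrightarrow> tvalid G (sc \<rho> ts)"
  by (auto simp: sc_def tvalid_def)
lemma bnd_sc: assumes "tr \<in> set (sc \<rho> ts)" shows "\<exists>tr'\<in>set ts. bnd tr = bnd tr'"
proof -
  obtain tr' where "tr' \<in> set ts" "tr = (\<rho> * fst tr', snd tr')" using assms unfolding sc_def by auto
  then show ?thesis by (intro bexI[of _ tr']) (simp_all add: bnd_def)
qed

lemma tval_filter: "tval ts = tval (filter P ts) + tval (filter (\<lambda>t. \<not> P t) ts)"
  unfolding tval_def by (rule sum_list_filter_split)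

lemma init_rep: assumes "finite G" "f \<in> lspan G" shows "\<exists>ts. tvalid G ts \<and> tval ts = f"
proof -
  obtain a where f: "f = (\<Sum>g\<in>G. smultv (a g) g)" using assms(2) by (auto simp: lspan_def)
  define S where "S g = {\<delta>. cf (a g) \<delta> \<noteq> 0}" for g
  define Ll where "Ll g = (SOME xs. set xs = S g \<and> distinct xs)" for g
  have Ll: "set (Ll g) = S g \<and> distinct (Ll g)" for g
    unfolding Ll_def by (rule someI_ex) (simp add: S_def finite_distinct_list)
  obtain Gl where Gl: "set Gl = G" "distinct Gl" using finite_distinct_list[OF assms(1)] by blast
  define tl where "tl g = map (\<lambda>\<delta>. (cf (a g) \<delta>, \<delta>, g)) (Ll g)" for g
  have tvl: "tval (tl g) = smultv (a g) g" for g
  proof -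
    have "tval (tl g) = (\<Sum>\<delta>\<in>S g. smultv (cf (a g) \<delta> * xm \<delta>) g)"
      using Ll[of g] by (simp add: tval_def tl_def tterm_def comp_def sum_list_distinct_conv_sum_set)
    also have "\<dots> = smultv (\<Sum>\<delta>\<in>S g. cf (a g) \<delta> * xm \<delta>) g" by (simp add: smultv_sum_left)
    also have "\<dots> = smultv (a g) g" using coef_repr[of "a g"] by (simp add: S_def)
    finally show ?thesis .
  qed
  have val: "tvalid G (tl g)" if "g \<in> G" for g
    using Ll[of g] that by (auto simp: tvalid_def tl_def S_def intro: coef_exps)
  define ts where "ts = concat (map tl Gl)"
  have "tval ts = (\<Sum>g\<in>G. smultv (a g) g)"
    by (simp add: ts_def tval_concat comp_def tvl sum_list_distinct_conv_sum_set Gl)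
  moreover have "tvalid G ts" using val Gl by (auto simp: ts_def tvalid_def)
  ultimately show ?thesis using f by blast
qed

end


lemma sum_list_zeros: "sum_list (map (\<lambda>t. 0::'b::monoid_add) xs) = 0"
  by (induction xs) auto

context pbw1 begin

lemma lower_rep:
  assumes G: "finite G" "G \<subseteq> vecs m" "0 \<notin> G"
    and Bgen: "\<And>F \<theta>. F \<subseteq> G \<Longrightarrow> XF_nonzero R x n vle F \<Longrightarrow> \<theta> \<in> exps n \<Longrightarrow>
                 finite (B F \<theta>) \<and> Rspan R (B F \<theta>) = SF R x n vle F \<theta>"
    and crit: "\<forall>F. F \<subseteq> G \<longrightarrow> XF_nonzero R x n vle F \<longrightarrow> (\<forall>\<theta>\<in>exps n. \<forall>b\<in>B F \<theta>.
                 red_plus R x n vle G (\<Sum>g\<in>F. smultv (b g * xm (gam R x n vle F g + \<theta>)) g) 0)"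
    and ts: "tvalid G ts" "tval ts = f" "\<forall>tr\<in>set ts. vle (bnd tr) X" and XM: "X \<in> MM"
    and fX: "vc f X = 0"
  shows "\<exists>ts'. tvalid G ts' \<and> tval ts' = f \<and> (\<forall>tr\<in>set ts'. vle (bnd tr) X \<and> bnd tr \<noteq> X)"
proof -
  define T where "T = filter (\<lambda>tr. bnd tr = X) ts"
  define U where "U = filter (\<lambda>tr. \<not> bnd tr = X) ts"
  have fTU: "f = tval T + tval U" using tval_filter[of ts "\<lambda>tr. bnd tr = X"] ts(2) T_def U_def by simp
  have vU: "tvalid G U" "\<forall>tr\<in>set U. vle (bnd tr) X \<and> bnd tr \<noteq> X" using ts by (auto simp: U_def tvalid_def)
  have vT: "tvalid G T" "\<forall>tr\<in>set T. bnd tr = X" using ts by (auto simp: T_def tvalid_def)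
  show ?thesis
  proof (cases "T = []")
    case True then show ?thesis using fTU vU by (intro exI[of _ U]) simp
  next
    case False
    define gof :: "'a \<times> mexp \<times> (nat \<Rightarrow> 'a) \<Rightarrow> (nat \<Rightarrow> 'a)" where "gof tr = snd (snd tr)" for tr
    define F where "F = gof ` set T"
    define \<beta> where "\<beta> g = fst (lmv g)" for g
    define \<alpha>F where "\<alpha>F g = (\<lambda>l. fst X l - \<beta> g l)" for g
    have FG: "F \<subseteq> G" using vT(1) by (auto simp: F_def gof_def tvalid_def)
    have Ffin: "finite F" by (simp add: F_def)
    have Fne: "F \<noteq> {}" using False by (simp add: F_def)
    have Xe: "fst X \<in> exps n" using XM by (auto simp: Mo_def)
    have trT: "fst (snd tr) = \<alpha>F (gof tr) \<and> snd (lmv (gof tr)) = snd X \<and> (\<forall>l. \<beta> (gof tr) l \<le> fst X l)"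
      if "tr \<in> set T" for tr
    proof -
      have b: "fst (snd tr) + \<beta> (gof tr) = fst X" "snd (lmv (gof tr)) = snd X"
        using vT(2) that by (auto simp: bnd_def \<beta>_def gof_def prod_eq_iff)
      have e: "fst (snd tr) l + \<beta> (gof tr) l = fst X l" for l using b(1) by (metis plus_fun_apply)
      have "fst (snd tr) = \<alpha>F (gof tr)"
      proof
        fix l show "fst (snd tr) l = \<alpha>F (gof tr) l" using e[of l] by (simp add: \<alpha>F_def)
      qed
      moreover have "\<forall>l. \<beta> (gof tr) l \<le> fst X l" using e by (metis le_add2)
      ultimately show ?thesis using b(2) by simp
    qed
    have gF: "snd (lmv g) = snd X" "\<And>l. \<beta> g l \<le> fst X l" "g \<in> G" if "g \<in> F" for g
      using that trT FG by (auto simp: F_def)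
    have gF2: "\<alpha>F g + \<beta> g = fst X" "\<alpha>F g \<in> exps n" if "g \<in> F" for g
    proof -
      show "\<alpha>F g + \<beta> g = fst X" using gF(2)[OF that] by (simp add: \<alpha>F_def fun_eq_iff)
      show "\<alpha>F g \<in> exps n" using Xe by (simp add: \<alpha>F_def exps_def)
    qed
    have XF: "XF_nonzero R x n vle F" using Fne gF(1) by (simp add: XF_nonzero_def)
    define E where "E = expXF R x n vle F"
    have Eb: "\<beta> g l \<le> E l" if "g \<in> F" for g l
      unfolding E_def expXF_def \<beta>_def using Ffin that by (intro Max_ge) auto
    have Ex: "E l \<le> fst X l" for l
      unfolding E_def expXF_def using Ffin Fne gF(2) by (auto simp: \<beta>_def intro!: Max.boundedI)
    define \<theta> where "\<theta> = (\<lambda>l. fst X l - E l)"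
    have \<theta>e: "\<theta> \<in> exps n" using Xe by (simp add: \<theta>_def exps_def)
    have gam\<theta>: "gam R x n vle F g + \<theta> = \<alpha>F g" if "g \<in> F" for g
    proof
      fix l
      have "\<beta> g l \<le> E l" "E l \<le> fst X l" using Eb[OF that] Ex by auto
      then show "(gam R x n vle F g + \<theta>) l = \<alpha>F g l"
        by (simp add: gam_def \<theta>_def \<alpha>F_def E_def[symmetric] \<beta>_def[symmetric])
    qed
    define b where "b g = sum_list (map (\<lambda>tr. if gof tr = g then fst tr else 0) T)" for g
    define C where "C g = spw (\<alpha>F g) (lcv g) * cb (\<alpha>F g) (\<beta> g)" for g
    have tcT: "tcoef tr = fst tr * C (gof tr)" if "tr \<in> set T" for tr
      using trT[OF that] by (simp add: tcoef_def C_def gof_def \<beta>_def mult.assoc)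
    have sumT0: "sum_list (map tcoef T) = 0"
    proof -
      have "vc f X = sum_list (map (\<lambda>tr. if bnd tr = X then tcoef tr else 0) ts)"
        using tval_coef[OF G(2,3) ts(1) XM ts(3)] ts(2) by simp
      also have "\<dots> = sum_list (map tcoef T)" by (simp add: sum_list_if_filter T_def)
      finally show ?thesis using fX by simp
    qed
    have bR: "b g \<in> R" for g
      unfolding b_def using vT(1) by (intro Rsum_list) (auto simp: tvalid_def)
    have b0: "b g = 0" if "g \<notin> F" for g
    proof -
      have hm: "map (\<lambda>tr. if gof tr = g then fst tr else 0) T = map (\<lambda>tr. 0) T"
        using that by (auto simp: F_def)
      show ?thesis unfolding b_def hm by (rule sum_list_zeros)
    qed

    have bsum: "(\<Sum>g\<in>F. b g * spw (gam R x n vle F g + \<theta>) (lcv g) * cb (gam R x n vle F g + \<theta>) (fst (lmv g))) = 0"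
    proof -
      have "(\<Sum>g\<in>F. b g * spw (gam R x n vle F g + \<theta>) (lcv g) * cb (gam R x n vle F g + \<theta>) (fst (lmv g)))
          = (\<Sum>g\<in>F. b g * C g)"
        by (rule sum.cong) (simp_all add: gam\<theta> C_def \<beta>_def mult.assoc)
      also have "\<dots> = (\<Sum>g\<in>F. sum_list (map (\<lambda>tr. if gof tr = g then fst tr * C (gof tr) else 0) T))"
      proof (rule sum.cong)
        fix g assume "g \<in> F"
        have "b g * C g = sum_list (map (\<lambda>tr. (if gof tr = g then fst tr else 0) * C g) T)"
          by (simp add: b_def sum_list_mult_const)
        also have "\<dots> = sum_list (map (\<lambda>tr. if gof tr = g then fst tr * C (gof tr) else 0) T)"
          by (rule arg_cong[where f = sum_list], rule map_cong) auto
        finally show "b g * C g = sum_list (map (\<lambda>tr. if gof tr = g then fst tr * C (gof tr) else 0) T)" .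
      qed simp
      also have "\<dots> = sum_list (map (\<lambda>tr. fst tr * C (gof tr)) T)"
        by (rule sum_swap_list[OF Ffin]) (simp add: F_def)
      also have "\<dots> = sum_list (map tcoef T)"
        by (rule arg_cong[where f = sum_list], rule map_cong) (simp_all add: tcT)
      finally show ?thesis using sumT0 by simp
    qed
    have bSF: "b \<in> SF R x n vle F \<theta>"
      unfolding SF_def using bR b0 bsum by blast
    have BG: "finite (B F \<theta>)" "Rspan R (B F \<theta>) = SF R x n vle F \<theta>" using Bgen[OF FG XF \<theta>e] by auto
    obtain \<rho> where \<rho>: "\<forall>k. \<rho> k \<in> R" "b = (\<lambda>g. \<Sum>k\<in>B F \<theta>. \<rho> k * k g)"
      using bSF BG(2)[symmetric] unfolding Rspan_def by blast
    have kSF: "k \<in> SF R x n vle F \<theta>" if kB: "k \<in> B F \<theta>" for k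
    proof -
      let ?r = "\<lambda>k'. if k' = k then (1::'a) else 0"
      have "(\<lambda>g. \<Sum>k'\<in>B F \<theta>. ?r k' * k' g) \<in> Rspan R (B F \<theta>)"
        unfolding Rspan_def by (rule CollectI, rule exI[of _ ?r]) auto
      moreover have "(\<lambda>g. \<Sum>k'\<in>B F \<theta>. ?r k' * k' g) = k"
      proof
        fix g
        have "(\<Sum>k'\<in>B F \<theta>. ?r k' * k' g) = (\<Sum>k'\<in>B F \<theta>. if k' = k then k g else 0)"
          by (rule sum.cong) auto
        also have "\<dots> = k g" using kB BG(1) by simp
        finally show "(\<Sum>k'\<in>B F \<theta>. ?r k' * k' g) = k g" .
      qed
      ultimately show ?thesis using BG(2) by simp
    qed
    obtain Fl where Fl: "set Fl = F" "distinct Fl" using finite_distinct_list[OF Ffin] by blast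
    define V where "V k = (\<Sum>g\<in>F. smultv (k g * xm (gam R x n vle F g + \<theta>)) g)" for k
    define Vl where "Vl k = map (\<lambda>g. (k g, \<alpha>F g, g)) Fl" for k :: "(nat \<Rightarrow> 'a) \<Rightarrow> 'a"
    have Vtv: "tval (Vl k) = V k" for k
    proof -
      have "tval (Vl k) = (\<Sum>g\<in>F. smultv (k g * xm (\<alpha>F g)) g)"
        by (simp add: tval_def Vl_def tterm_def comp_def sum_list_distinct_conv_sum_set Fl)
      also have "\<dots> = V k" unfolding V_def by (rule sum.cong) (simp_all add: gam\<theta>)
      finally show ?thesis .
    qed
    have Vvalid: "tvalid G (Vl k)" if "k \<in> B F \<theta>" for k
      using kSF[OF that] gF2(2) gF(3) Fl(1) by (auto simp: Vl_def tvalid_def SF_def)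
    have Vbnd: "bnd tr = X" if "tr \<in> set (Vl k)" for tr k
      using that gF2(1) gF(1) Fl(1) by (auto simp: Vl_def bnd_def \<beta>_def prod_eq_iff)
    have VX: "vc (V k) X = 0" if kB: "k \<in> B F \<theta>" for k
    proof -
      have "vc (V k) X = sum_list (map (\<lambda>tr. if bnd tr = X then tcoef tr else 0) (Vl k))"
        using tval_coef[OF G(2,3) Vvalid[OF kB] XM] Vbnd vle_refl[OF XM] Vtv by simp
      also have "\<dots> = sum_list (map tcoef (Vl k))"
        by (rule arg_cong[where f = sum_list], rule map_cong) (simp_all add: Vbnd)
      also have "\<dots> = (\<Sum>g\<in>F. k g * spw (\<alpha>F g) (lcv g) * cb (\<alpha>F g) (\<beta> g))"
        by (simp add: Vl_def tcoef_def comp_def sum_list_distinct_conv_sum_set Fl \<beta>_def)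
      also have "\<dots> = (\<Sum>g\<in>F. k g * spw (gam R x n vle F g + \<theta>) (lcv g) * cb (gam R x n vle F g + \<theta>) (fst (lmv g)))"
        by (rule sum.cong) (simp_all add: gam\<theta> \<beta>_def)
      also have "\<dots> = 0" using kSF[OF kB] by (simp add: SF_def)
      finally show ?thesis .
    qed
    have tsV_ex: "\<exists>tsk. tvalid G tsk \<and> tval tsk = V k \<and> (\<forall>tr\<in>set tsk. vle (bnd tr) X \<and> bnd tr \<noteq> X)"
      if kB: "k \<in> B F \<theta>" for k
    proof -
      have Vv: "V k \<in> vecs m" using tval_vecs[OF G(2,3) Vvalid[OF kB]] Vtv by simp
      have "red_plus R x n vle G (V k) 0" using crit FG XF \<theta>e kB unfolding V_def by blast
      then obtain tsk where tsk: "tvalid G tsk" "tval tsk = V k" "\<forall>tr\<in>set tsk. vle (bnd tr) (lmv (V k))"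
        "V k = 0 \<longrightarrow> tsk = []"
        using redplus_repr[OF G(2,3) _ refl Vv] by blast
      have "vle (bnd tr) X \<and> bnd tr \<noteq> X" if tr: "tr \<in> set tsk" for tr
      proof -
        have Vnz: "V k \<noteq> 0" using tsk(4) tr by auto
        note LV = lmV_prop[OF Vv Vnz]
        have "vle (lmv (V k)) X"
          using tval_supp[OF G(2,3) Vvalid[OF kB] XM] Vbnd vle_refl[OF XM] Vtv LV(2) by simp
        moreover have "lmv (V k) \<noteq> X" using LV(2) VX[OF kB] by auto
        moreover have "bnd tr \<in> MM" using tsk(1) tr tterm_props(2)[OF G(2,3)] by (auto simp: tvalid_def)
        moreover have "vle (bnd tr) (lmv (V k))" using tsk(3) tr by blast
        ultimately show ?thesis using vle_trans[of "bnd tr" "lmv (V k)" X] vle_antisym[of X "lmv (V k)"] LV(1) XM by auto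
      qed
      then show ?thesis using tsk by blast
    qed
    define tsV where "tsV k = (SOME tsk. tvalid G tsk \<and> tval tsk = V k \<and> (\<forall>tr\<in>set tsk. vle (bnd tr) X \<and> bnd tr \<noteq> X))" for k
    have tsV: "tvalid G (tsV k) \<and> tval (tsV k) = V k \<and> (\<forall>tr\<in>set (tsV k). vle (bnd tr) X \<and> bnd tr \<noteq> X)"
      if "k \<in> B F \<theta>" for k
      unfolding tsV_def by (rule someI_ex) (rule tsV_ex[OF that])
    obtain Bl where Bl: "set Bl = B F \<theta>" "distinct Bl" using finite_distinct_list[OF BG(1)] by blast
    define ts' where "ts' = U @ concat (map (\<lambda>k. sc (\<rho> k) (tsV k)) Bl)"
    have key: "(\<Sum>k\<in>B F \<theta>. smultv (\<rho> k) (V k)) = tval T"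
    proof -
      have "(\<Sum>k\<in>B F \<theta>. smultv (\<rho> k) (V k)) = (\<Sum>k\<in>B F \<theta>. \<Sum>g\<in>F. smultv (\<rho> k * k g * xm (\<alpha>F g)) g)"
        unfolding V_def by (rule sum.cong) (simp_all add: smultv_sum_right smultv_assoc gam\<theta> mult.assoc)
      also have "\<dots> = (\<Sum>g\<in>F. \<Sum>k\<in>B F \<theta>. smultv (\<rho> k * k g * xm (\<alpha>F g)) g)" by (rule sum.swap)
      also have "\<dots> = (\<Sum>g\<in>F. smultv (b g * xm (\<alpha>F g)) g)"
        by (rule sum.cong) (simp_all add: \<rho>(2) smultv_sum_left sum_distrib_right)
      also have "\<dots> = (\<Sum>g\<in>F. sum_list (map (\<lambda>tr. if gof tr = g then tterm tr else 0) T))"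
      proof (rule sum.cong)
        fix g assume "g \<in> F"
        have "smultv (b g * xm (\<alpha>F g)) g = sum_list (map (\<lambda>tr. smultv ((if gof tr = g then fst tr else 0) * xm (\<alpha>F g)) g) T)"
          unfolding b_def by (simp only: sum_list_mult_const[symmetric] smultv_sum_list_left)
        also have "\<dots> = sum_list (map (\<lambda>tr. if gof tr = g then tterm tr else 0) T)"
          by (rule arg_cong[where f = sum_list], rule map_cong) (auto simp: tterm_def gof_def trT)
        finally show "smultv (b g * xm (\<alpha>F g)) g = sum_list (map (\<lambda>tr. if gof tr = g then tterm tr else 0) T)" .
      qed simp
      also have "\<dots> = sum_list (map tterm T)"
        by (rule sum_swap_list[OF Ffin]) (simp add: F_def)
      finally show ?thesis by (simp add: tval_def)
    qed
    have val': "tval ts' = f"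
    proof -
      have "tval (concat (map (\<lambda>k. sc (\<rho> k) (tsV k)) Bl)) = sum_list (map (\<lambda>k. smultv (\<rho> k) (V k)) Bl)"
        by (simp add: tval_concat comp_def tval_sc) (rule arg_cong[where f = sum_list], rule map_cong, simp_all add: Bl tsV)
      also have "\<dots> = (\<Sum>k\<in>B F \<theta>. smultv (\<rho> k) (V k))" by (simp add: sum_list_distinct_conv_sum_set Bl)
      finally show ?thesis using key fTU by (simp add: ts'_def add.commute)
    qed
    have valid': "tvalid G ts'"
    proof -
      have "tvalid G (sc (\<rho> k) (tsV k))" if "k \<in> set Bl" for k
        using tvalid_sc[OF \<rho>(1)[rule_format] conjunct1[OF tsV]] that Bl(1) by blast
      then have "tvalid G (concat (map (\<lambda>k. sc (\<rho> k) (tsV k)) Bl))"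
        by (auto simp: tvalid_def)
      then show ?thesis using vU(1) by (simp add: ts'_def)
    qed
    have bnd': "\<forall>tr\<in>set ts'. vle (bnd tr) X \<and> bnd tr \<noteq> X"
    proof
      fix tr assume "tr \<in> set ts'"
      then consider "tr \<in> set U" | k where "k \<in> B F \<theta>" "tr \<in> set (sc (\<rho> k) (tsV k))"
        unfolding ts'_def using Bl by auto
      then show "vle (bnd tr) X \<and> bnd tr \<noteq> X"
      proof cases
        case 1 then show ?thesis using vU by blast
      next
        case 2
        then obtain tr' where "tr' \<in> set (tsV k)" "bnd tr = bnd tr'" using bnd_sc by blast
        then show ?thesis using tsV[OF 2(1)] by auto
      qed
    qed
    show ?thesis using valid' val' bnd' by blast
  qed
qed

end



lemma M_sum: "submodule m (M :: (nat \<Rightarrow> 'a::ring_1) set) \<Longrightarrow> (\<And>i. i \<in> I \<Longrightarrow> g i \<in> M) \<Longrightarrow> (\<Sum>i\<in>I. g i) \<in> M"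
proof (induction I rule: infinite_finite_induct)
  case (infinite A)
  have e: "(\<Sum>i\<in>A. g i) = 0" using infinite(1) by (rule sum.infinite)
  have z: "0 \<in> M" using infinite(2) by (simp add: submodule_def)
  show ?case unfolding e by (rule z)
next
  case empty
  have z: "0 \<in> M" using empty by (simp add: submodule_def)
  show ?case unfolding sum.empty by (rule z)
next
  case (insert i I)
  have a: "g i \<in> M" "sum g I \<in> M" using insert by auto
  have "g i + sum g I \<in> M" using a insert.prems(1) unfolding submodule_def by blast
  then show ?case unfolding sum.insert[OF insert.hyps(1,2)] .
qed

lemma M_smult: "submodule m M \<Longrightarrow> f \<in> M \<Longrightarrow> smultv a f \<in> M"
  by (simp add: submodule_def)

lemma M_diff: assumes "submodule m (M :: (nat \<Rightarrow> 'a::ring_1) set)" "f \<in> M" "g \<in> M" shows "f - g \<in> M"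
proof -
  have e: "f - g = f + smultv (-1) g" by (simp add: smultv_def fun_eq_iff)
  have "smultv (-1) g \<in> M" using assms(1,3) by (simp add: submodule_def)
  then have "f + smultv (-1) g \<in> M" using assms(1,2) unfolding submodule_def by blast
  then show ?thesis by (subst e)
qed

context pbw1 begin

lemma gb_redplus: assumes subm: "submodule m M" and G: "G \<subseteq> M" "0 \<notin> G"
   and red: "\<forall>f\<in>M. f \<noteq> 0 \<longrightarrow> reducible R x n vle G f"
   shows "f \<in> M \<Longrightarrow> red_plus R x n vle G f 0"
proof -
  have Mv: "M \<subseteq> vecs m" using subm by (simp add: submodule_def)
  have Gv: "G \<subseteq> vecs m" using G Mv by blast
  have main: "\<forall>f\<in>M. f \<noteq> 0 \<longrightarrow> mu (lmv f) = N \<longrightarrow> red_plus R x n vle G f 0" for N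
  proof (induction N rule: less_induct)
    case (less N)
    show ?case
    proof (intro ballI impI)
      fix f assume f: "f \<in> M" "f \<noteq> 0" "mu (lmv f) = N"
      have fv: "f \<in> vecs m" using f Mv by blast
      obtain h where r1: "red1 R x n vle G f h" using red f by (auto simp: reducible_def)
      obtain t :: nat and fs rs as where
        c: "\<forall>i<t. fs i \<in> G"
        and h: "h = f - (\<Sum>i<t. smultv (rs i * xm (as i)) (fs i))"
        using r1 unfolding red1_def by blast
      have hM: "h \<in> M" unfolding h
        by (rule M_diff[OF subm f(1)], rule M_sum[OF subm], rule M_smult[OF subm]) (use c G in blast)
      note low = red1_lower[OF fv Gv G(2) r1]
      have st: "redstep R x n vle G f h" using r1 by (simp add: redstep_def)
      have "red_plus R x n vle G h 0"
      proof (cases "h = 0")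
        case True then show ?thesis by (simp add: red_plus_def)
      next
        case False
        note Lh = lmV_prop[OF low(1) False]
        note Lf = lmV_prop[OF fv f(2)]
        have "vle (lmv h) (lmv f) \<and> lmv h \<noteq> lmv f" using low(2)[OF Lh(2)] .
        then have "mu (lmv h) < N" using mu_less Lh(1) Lf(1) f(3) by blast
        then show ?thesis using less.IH hM False by blast
      qed
      then show "red_plus R x n vle G f 0"
        using st unfolding red_plus_def by (metis converse_rtranclp_into_rtranclp)
    qed
  qed
  assume "f \<in> M"
  then show ?thesis
  proof (cases "f = 0")
    case True then show ?thesis by (simp add: red_plus_def)
  next
    case False then show ?thesis using main \<open>f \<in> M\<close> by blast
  qed
qed

lemma crit_reducible:
  assumes G: "finite G" "G \<subseteq> vecs m" "0 \<notin> G"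
    and Bgen: "\<And>F \<theta>. F \<subseteq> G \<Longrightarrow> XF_nonzero R x n vle F \<Longrightarrow> \<theta> \<in> exps n \<Longrightarrow>
                 finite (B F \<theta>) \<and> Rspan R (B F \<theta>) = SF R x n vle F \<theta>"
    and crit: "\<forall>F. F \<subseteq> G \<longrightarrow> XF_nonzero R x n vle F \<longrightarrow> (\<forall>\<theta>\<in>exps n. \<forall>b\<in>B F \<theta>.
                 red_plus R x n vle G (\<Sum>g\<in>F. smultv (b g * xm (gam R x n vle F g + \<theta>)) g) 0)"
    and f: "f \<in> lspan G" "f \<noteq> 0"
  shows "reducible R x n vle G f"
proof -
  obtain ts0 where ts0: "tvalid G ts0" "tval ts0 = f" using init_rep[OF G(1) f(1)] by blast
  have fv: "f \<in> vecs m" using tval_vecs[OF G(2,3) ts0(1)] ts0(2) by simp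
  define A where "A = {Z \<in> MM. \<exists>ts. tvalid G ts \<and> tval ts = f \<and> (\<forall>tr\<in>set ts. vle (bnd tr) Z)}"
  have bM: "bnd tr \<in> MM" if "tvalid G ts" "tr \<in> set ts" for ts tr
  proof -
    have "fst tr \<in> R" "fst (snd tr) \<in> exps n" "snd (snd tr) \<in> G" using that unfolding tvalid_def by auto
    then show ?thesis by (rule tterm_props(2)[OF G(2,3)])
  qed
  have maxb: "\<exists>Z\<in>bnd ` set ts. \<forall>tr\<in>set ts. vle (bnd tr) Z" if "tvalid G ts" "ts \<noteq> []" for ts
  proof -
    have sub: "bnd ` set ts \<subseteq> MM" using bM[OF that(1)] by blast
    have ne: "bnd ` set ts \<noteq> {}" using that(2) by simp
    have fin: "finite (bnd ` set ts)" by simp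
    obtain Z where Z: "Z \<in> bnd ` set ts" "\<forall>Y\<in>bnd ` set ts. vle Y Z" using Mo_fin_ne_max[OF fin ne sub] by blast
    have "\<forall>tr\<in>set ts. vle (bnd tr) Z" using Z(2) by simp
    then show ?thesis using Z(1) by blast
  qed
  have inA: "\<exists>Z\<in>bnd ` set ts. Z \<in> A \<and> (\<forall>tr\<in>set ts. vle (bnd tr) Z)" if tv: "tvalid G ts" and tf: "tval ts = f" for ts
  proof -
    have "ts \<noteq> []"
    proof
      assume "ts = []" then show False using tf f(2) by simp
    qed
    then obtain Z where Z: "Z \<in> bnd ` set ts" "\<forall>tr\<in>set ts. vle (bnd tr) Z" using maxb[OF tv] by blast
    obtain tr where tr: "tr \<in> set ts" "Z = bnd tr" using Z(1) by blast
    have ZM: "Z \<in> MM" using bM[OF tv tr(1)] tr(2) by simp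
    have "Z \<in> A" unfolding A_def using ZM tv tf Z(2) by blast
    then show ?thesis using Z by blast
  qed
  obtain Z0 where "Z0 \<in> A" using inA[OF ts0] by blast
  then obtain X where X: "X \<in> A" "\<And>Y. Y \<in> A \<Longrightarrow> mu X \<le> mu Y"
    using ex_has_least_nat[of "\<lambda>Z. Z \<in> A" Z0 mu] by blast
  obtain ts where ts: "tvalid G ts" "tval ts = f" "\<forall>tr\<in>set ts. vle (bnd tr) X" and XM: "X \<in> MM"
    using X(1) unfolding A_def by blast
  note Lf = lmV_prop[OF fv f(2)]
  have le: "vle (lmv f) X" using tval_supp[OF G(2,3) ts(1) XM ts(3)] Lf(2) ts(2) by simp
  show ?thesis
  proof (cases "lmv f = X")
    case True
    define T where "T = filter (\<lambda>tr. bnd tr = X) ts"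
    have lc: "lcv f = sum_list (map tcoef T)"
    proof -
      have "lcv f = vc (tval ts) X" using True ts(2) by (simp add: lcV_def)
      also have "\<dots> = sum_list (map (\<lambda>tr. if bnd tr = X then tcoef tr else 0) ts)"
        by (rule tval_coef[OF G(2,3) ts(1) XM ts(3)])
      finally show ?thesis by (simp add: sum_list_if_filter T_def)
    qed
    define t where "t = length T"
    define fs where "fs i = snd (snd (T ! i))" for i
    define rs where "rs i = fst (T ! i)" for i
    define as where "as i = fst (snd (T ! i))" for i
    have Ti: "T ! i \<in> set ts \<and> bnd (T ! i) = X" if "i < t" for i
      using nth_mem[of i T] that by (simp add: t_def T_def)
    have conds: "\<forall>i<t. fs i \<in> G \<and> rs i \<in> R \<and> snd (lmv (fs i)) = snd (lmv f) \<and> as i + fst (lmv (fs i)) = fst (lmv f)"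
    proof (intro allI impI)
      fix i assume i: "i < t"
      have v: "fst (T ! i) \<in> R" "snd (snd (T ! i)) \<in> G" using Ti[OF i] ts(1) by (auto simp: tvalid_def)
      have "bnd (T ! i) = lmv f" using Ti[OF i] True by simp
      then show "fs i \<in> G \<and> rs i \<in> R \<and> snd (lmv (fs i)) = snd (lmv f) \<and> as i + fst (lmv (fs i)) = fst (lmv f)"
        using v by (auto simp: fs_def rs_def as_def bnd_def prod_eq_iff)
    qed
    have lc2: "lcv f = (\<Sum>i<t. rs i * spw (as i) (lcv (fs i)) * cb (as i) (fst (lmv (fs i))))"
      unfolding lc sum_list_sum_nth t_def
      by (simp add: atLeast0LessThan tcoef_def fs_def rs_def as_def)
    have "red1 R x n vle G f (f - (\<Sum>i<t. smultv (rs i * xm (as i)) (fs i)))"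
      unfolding red1_def using f(2) conds lc2 by blast
    then show ?thesis using f(2) by (auto simp: reducible_def)
  next
    case False
    have fX: "vc f X = 0"
    proof (rule ccontr)
      assume "vc f X \<noteq> 0"
      then have "vle X (lmv f)" using Lf(3) by blast
      then show False using le False vle_antisym Lf(1) XM by blast
    qed
    obtain ts' where ts': "tvalid G ts'" "tval ts' = f" "\<forall>tr\<in>set ts'. vle (bnd tr) X \<and> bnd tr \<noteq> X"
      using lower_rep[OF G Bgen crit ts XM fX] by blast
    obtain Z where Z: "Z \<in> bnd ` set ts'" "Z \<in> A" using inA[OF ts'(1,2)] by blast
    have ZX: "vle Z X" "Z \<noteq> X" using Z(1) ts'(3) by auto
    have "Z \<in> MM" using Z(2) by (simp add: A_def)
    then have "mu Z < mu X" using mu_less XM ZX by blast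
    then show ?thesis using X(2)[OF Z(2)] by simp
  qed
qed

end

theorem theorem29:
  fixes R :: "'a::ring_1 set" and x :: "nat \<Rightarrow> 'a" and n m :: nat
    and mle :: "mexp \<Rightarrow> mexp \<Rightarrow> bool"
    and vle :: "mexp \<times> nat \<Rightarrow> mexp \<times> nat \<Rightarrow> bool"
    and M G :: "(nat \<Rightarrow> 'a) set"
    and B :: "(nat \<Rightarrow> 'a) set \<Rightarrow> mexp \<Rightarrow> ((nat \<Rightarrow> 'a) \<Rightarrow> 'a) set"
  assumes pbw: "sigma_PBW R x n"
    and noeth: "left_noetherian R"
    and mord: "mon_order R x n mle"
    and vord: "vmon_order R x n mle m vle"
    and subm: "submodule m M" and Mnz: "M \<noteq> {0}"
    and Gfin: "finite G" and Gnz: "0 \<notin> G" and Gvec: "G \<subseteq> vecs m"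
    and Ggen: "M = lspan G"
    and Bgen: "\<And>F \<theta>. F \<subseteq> G \<Longrightarrow> XF_nonzero R x n vle F \<Longrightarrow> \<theta> \<in> exps n \<Longrightarrow>
                 finite (B F \<theta>) \<and> Rspan R (B F \<theta>) = SF R x n vle F \<theta>"
  shows "(groebner_basis R x n vle M G \<longleftrightarrow>
           (\<forall>F. F \<subseteq> G \<longrightarrow> XF_nonzero R x n vle F \<longrightarrow>
              (\<forall>\<theta>\<in>exps n. \<forall>b\<in>B F \<theta>.
                 red_plus R x n vle G
                   (\<Sum>g\<in>F. smultv (b g * xmon x n (gam R x n vle F g + \<theta>)) g) 0)))
       \<and> (groebner_basis R x n vle M G \<longrightarrow>
           (\<forall>F. F \<subseteq> G \<longrightarrow> XF_nonzero R x n vle F \<longrightarrow>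
              (\<forall>b\<in>B F 0.
                 red_plus R x n vle G
                   (\<Sum>g\<in>F. smultv (b g * xmon x n (gam R x n vle F g)) g) 0)))"
proof -
  interpret pbw1 R x n mle m vle
    using pbw mord vord by (simp add: pbw1_def pbw1_axioms_def pbw0_def)
  have GM: "G \<subseteq> M"
  proof
    fix g assume g: "g \<in> G"
    have "(\<Sum>g'\<in>G. smultv (if g' = g then 1 else 0) g') = (\<Sum>g'\<in>G. if g' = g then g' else 0)"
      by (rule sum.cong) auto
    also have "\<dots> = g" using g Gfin by simp
    finally have eq: "g = (\<Sum>g'\<in>G. smultv (if g' = g then 1 else 0) g')" by simp
    have "g \<in> lspan G" unfolding lspan_def
      by (rule CollectI, rule exI[of _ "\<lambda>g'. if g' = g then 1 else 0"]) (intro conjI TrueI eq)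
    then show "g \<in> M" using Ggen by simp
  qed
  have Gne: "G \<noteq> {}"
  proof
    assume "G = {}"
    then have "lspan G = {0}" unfolding lspan_def by simp
    then show False using Mnz Ggen by simp
  qed
  let ?crit = "\<forall>F. F \<subseteq> G \<longrightarrow> XF_nonzero R x n vle F \<longrightarrow>
              (\<forall>\<theta>\<in>exps n. \<forall>b\<in>B F \<theta>.
                 red_plus R x n vle G
                   (\<Sum>g\<in>F. smultv (b g * xmon x n (gam R x n vle F g + \<theta>)) g) 0)"
  have part1: "groebner_basis R x n vle M G \<longleftrightarrow> ?crit"
  proof
    assume gb: "groebner_basis R x n vle M G"
    then have red: "\<forall>f\<in>M. f \<noteq> 0 \<longrightarrow> reducible R x n vle G f" by (simp add: groebner_basis_def)
    show ?crit
    proof (intro allI impI ballI)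
      fix F \<theta> b assume F: "F \<subseteq> G"
      have "(\<Sum>g\<in>F. smultv (b g * xmon x n (gam R x n vle F g + \<theta>)) g) \<in> M"
        by (rule M_sum[OF subm], rule M_smult[OF subm]) (use F GM in blast)
      then show "red_plus R x n vle G (\<Sum>g\<in>F. smultv (b g * xmon x n (gam R x n vle F g + \<theta>)) g) 0"
        by (rule gb_redplus[OF subm GM Gnz red])
    qed
  next
    assume crit: ?crit
    have red: "\<forall>f\<in>M. f \<noteq> 0 \<longrightarrow> reducible R x n vle G f"
    proof (intro ballI impI)
      fix f assume f: "f \<in> M" "f \<noteq> 0"
      have "f \<in> lspan G" using f(1) Ggen by simp
      then show "reducible R x n vle G f" using crit_reducible[OF Gfin Gvec Gnz Bgen crit] f(2) by blast
    qed
    show "groebner_basis R x n vle M G"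
      unfolding groebner_basis_def using Gne Gfin GM Gnz red by blast
  qed
  have part2: "groebner_basis R x n vle M G \<longrightarrow>
           (\<forall>F. F \<subseteq> G \<longrightarrow> XF_nonzero R x n vle F \<longrightarrow>
              (\<forall>b\<in>B F 0.
                 red_plus R x n vle G
                   (\<Sum>g\<in>F. smultv (b g * xmon x n (gam R x n vle F g)) g) 0))"
  proof (intro impI allI ballI)
    fix F b assume gb: "groebner_basis R x n vle M G" and F: "F \<subseteq> G" and XF: "XF_nonzero R x n vle F"
      and b: "b \<in> B F 0"
    have crit: ?crit using part1 gb by blast
    have "red_plus R x n vle G (\<Sum>g\<in>F. smultv (b g * xmon x n (gam R x n vle F g + 0)) g) 0"
      using crit F XF exps0 b by blast
    then show "red_plus R x n vle G (\<Sum>g\<in>F. smultv (b g * xmon x n (gam R x n vle F g)) g) 0"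
      by (simp only: add_0_right)
  qed
  show ?thesis using part1 part2 by blast
qed


end
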